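(* Let $\Xi$, $F_\beta$, $\beta_3$, $\beta_1=2$, $\mathbf{p}$, $\mathbf{m}_i^\beta$, $\boldsymbol{\sigma}_i^\beta$ be as in the context. For $\beta>\beta_3$ let $H_\beta=F_\beta(\boldsymbol{\sigma}_0^\beta)$ $(=F_\beta(\boldsymbol{\sigma}_1^\beta)=F_\beta(\boldsymbol{\sigma}_2^\beta))$, $W_\beta=\{\mathbf{x}\in\Xi: F_\beta(\mathbf{x})<H_\beta\}$, let $W_\beta(i)$, $0\le i\le2$, be the connected component of $W_\beta$ containing $\mathbf{m}_i^\beta$, and, for $\beta<\beta_1$, let $W_\beta(3)$ be the connected component of $W_\beta$ containing $\mathbf{p}$. For $i\ne j$ let $\mathfrak{S}_{i,j}=\overline{W_\beta(i)}\cap\overline{W_\beta(j)}$. Then: (1) For $\beta\ge\beta_1$, the sets $W_\beta(i)$, $0\le i\le2$, are pairwise different. (2) For $\beta>\beta_1$, $\mathfrak{S}_{i,j}=\{\boldsymbol{\sigma}_k^\beta\}$ whenever $\{i,j,k\}=\{0,1,2\}$. (3) For $\beta=\beta_1$ and $0\le i\ne j\le2$, $\mathfrak{S}_{i,j}=\{\mathbf{p}\}$. (4) For $\beta_3<\beta<\beta_1$, the sets $W_\beta(i)$, $0\le i\le3$, are pairwise different. (5) For $\beta_3<\beta<\beta_1$, $\mathfrak{S}_{i,j}=\varnothing$ for $0\le i\ne j\le2$, and $\mathfrak{S}_{i,3}=\{\boldsymbol{\sigma}_i^\beta\}$ for $0\le i\le2$.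
   Context: $\Xi=\{(x_1,x_2): x_1,x_2\ge0,\ x_1+x_2\le1\}$, $x_0=1-x_1-x_2$, $F_\beta(\mathbf{x})=-\frac12|\sum_{k=0}^2x_k\mathbf{v}_k|^2+\frac1\beta\sum_{k=0}^2x_k\log(3x_k)$ with $\mathbf{v}_k=(\cos(2\pi k/3),\sin(2\pi k/3))$ and $0\log0=0$. $\mathbf{p}=(1/3,1/3)$. Define $f_0(t)=\frac{2}{3(1-3t)}\log\frac{1-2t}{t}$ for $t\in(0,1/2)\setminus\{1/3\}$, $f_0(1/3)=2$; $m_0$ is the minimizer of $f_0$ and $\beta_3=f_0(m_0)$. For $\beta>\beta_3$ the equation $f_0(t)=\beta$ has exactly two solutions $p_\beta<m_0<q_\beta$ in $(0,1/2)$ (for $\beta=2$, $q_\beta=1/3$). Set $\mathbf{m}_0^\beta=(p_\beta,p_\beta)$, $\mathbf{m}_1^\beta=(1-2p_\beta,p_\beta)$, $\mathbf{m}_2^\beta=(p_\beta,1-2p_\beta)$, $\boldsymbol{\sigma}_0^\beta=(q_\beta,q_\beta)$, $\boldsymbol{\sigma}_1^\beta=(1-2q_\beta,q_\beta)$, $\boldsymbol{\sigma}_2^\beta=(q_\beta,1-2q_\beta)$. $\overline{A}$ denotes closure. *)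

theory Defs
  imports "HOL-Analysis.Analysis"
begin

text \<open>Points of the plane are pairs (x1, x2); x0 = 1 - x1 - x2.\<close>

definition Xi :: "(real \<times> real) set" where
  "Xi = {(x1, x2). 0 \<le> x1 \<and> 0 \<le> x2 \<and> x1 + x2 \<le> 1}"

definition xlog3 :: "real \<Rightarrow> real" where
  "xlog3 x = (if x = 0 then 0 else x * ln (3 * x))"

definition vx :: "nat \<Rightarrow> real" where "vx k = cos (2 * pi * real k / 3)"
definition vy :: "nat \<Rightarrow> real" where "vy k = sin (2 * pi * real k / 3)"

definition coord :: "real \<times> real \<Rightarrow> nat \<Rightarrow> real" where
  "coord x k = (if k = 0 then 1 - fst x - snd x else if k = 1 then fst x else snd x)"

definition F :: "real \<Rightarrow> real \<times> real \<Rightarrow> real" where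
  "F \<beta> x = - (1/2) * ((\<Sum>k<3. coord x k * vx k)\<^sup>2 + (\<Sum>k<3. coord x k * vy k)\<^sup>2)
            + (1 / \<beta>) * (\<Sum>k<3. xlog3 (coord x k))"

definition p_pt :: "real \<times> real" where "p_pt = (1/3, 1/3)"

definition f0 :: "real \<Rightarrow> real" where
  "f0 t = (if t = 1/3 then 2 else 2 / (3 * (1 - 3 * t)) * ln ((1 - 2 * t) / t))"

definition m0 :: real where
  "m0 = (THE t. t \<in> {0<..<1/2} \<and> (\<forall>s\<in>{0<..<1/2}. f0 t \<le> f0 s))"

definition beta3 :: real where "beta3 = f0 m0"

definition p_beta :: "real \<Rightarrow> real" where
  "p_beta \<beta> = (THE t. 0 < t \<and> t < m0 \<and> f0 t = \<beta>)"

definition q_beta :: "real \<Rightarrow> real" where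
  "q_beta \<beta> = (THE t. m0 < t \<and> t < 1/2 \<and> f0 t = \<beta>)"

definition mpt :: "real \<Rightarrow> nat \<Rightarrow> real \<times> real" where
  "mpt \<beta> i = (let p = p_beta \<beta> in
     if i = 0 then (p, p) else if i = 1 then (1 - 2 * p, p) else (p, 1 - 2 * p))"

definition sigma :: "real \<Rightarrow> nat \<Rightarrow> real \<times> real" where
  "sigma \<beta> i = (let q = q_beta \<beta> in
     if i = 0 then (q, q) else if i = 1 then (1 - 2 * q, q) else (q, 1 - 2 * q))"

definition H :: "real \<Rightarrow> real" where "H \<beta> = F \<beta> (sigma \<beta> 0)"

definition W :: "real \<Rightarrow> (real \<times> real) set" where
  "W \<beta> = {x \<in> Xi. F \<beta> x < H \<beta>}"

definition Wc :: "real \<Rightarrow> nat \<Rightarrow> (real \<times> real) set" where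
  "Wc \<beta> i = (if i = 3 then connected_component_set (W \<beta>) p_pt
             else connected_component_set (W \<beta>) (mpt \<beta> i))"

definition Sfrak :: "real \<Rightarrow> nat \<Rightarrow> nat \<Rightarrow> (real \<times> real) set" where
  "Sfrak \<beta> i j = closure (Wc \<beta> i) \<inter> closure (Wc \<beta> j)"

end

theory Submission
  imports Defs "HOL-Real_Asymp.Real_Asymp"
begin


definition G :: "real \<Rightarrow> real \<Rightarrow> real" where
  "G b t = - 3/4 * t^2 + (1/b) * xlog3 t"

lemma vx_vals: "vx 0 = 1" "vx (Suc 0) = -1/2" "vx (Suc (Suc 0)) = -1/2"
proof -
  show "vx 0 = 1" by (simp add: vx_def)
  show "vx (Suc 0) = -1/2" by (simp add: vx_def cos_120)
  have "vx (Suc (Suc 0)) = cos (pi + pi/3)" unfolding vx_def by (rule arg_cong[where f=cos]) simp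
  also have "\<dots> = -1/2" by (simp only: cos_add cos_60 cos_pi sin_pi)
  finally show "vx (Suc (Suc 0)) = -1/2" .
qed

lemma vy_vals: "vy 0 = 0" "vy (Suc 0) = sqrt 3/2" "vy (Suc (Suc 0)) = - sqrt 3/2"
proof -
  show "vy 0 = 0" by (simp add: vy_def)
  have "vy (Suc 0) = sin (pi * 2 / 3)" unfolding vy_def by (rule arg_cong[where f=sin]) simp
  also have "\<dots> = sqrt 3/2" by (simp add: sin_120')
  finally show "vy (Suc 0) = sqrt 3/2" .
  have "vy (Suc (Suc 0)) = sin (pi + pi/3)" unfolding vy_def by (rule arg_cong[where f=sin]) simp
  also have "\<dots> = - sqrt 3/2" by (simp only: sin_add sin_60 cos_pi sin_pi)
  finally show "vy (Suc (Suc 0)) = - sqrt 3/2" .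
qed

lemma F_G: "F b x = G b (coord x 0) + G b (coord x 1) + G b (coord x 2) + 1/4"
proof -
  obtain x1 x2 where x: "x = (x1, x2)" by (cases x)
  have s3: "sqrt 3 * sqrt 3 = 3" by simp
  have A: "(\<Sum>k<3. coord x k * vx k) = (1 - x1 - x2) - x1/2 - x2/2"
    by (simp add: numeral_3_eq_3 lessThan_Suc vx_vals coord_def x)
  have B: "(\<Sum>k<3. coord x k * vy k) = x1 * sqrt 3 / 2 - x2 * sqrt 3/2"
    by (simp add: numeral_3_eq_3 lessThan_Suc vy_vals coord_def x)
  have C: "(\<Sum>k<3. xlog3 (coord x k)) = xlog3 (coord x 0) + xlog3 (coord x 1) + xlog3 (coord x 2)"
    by (simp add: numeral_3_eq_3 lessThan_Suc numeral_2_eq_2)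
  show ?thesis
    unfolding F_def A B C G_def
    by (simp add: coord_def x power2_eq_square algebra_simps s3 add_divide_distrib diff_divide_distrib)
qed


definition Gd :: "real \<Rightarrow> real \<Rightarrow> real" where
  "Gd b t = - 3/2 * t + (ln (3*t) + 1) / b"

lemma xlog3_pos: "t > 0 \<Longrightarrow> xlog3 t = t * ln (3*t)"
  by (simp add: xlog3_def)

lemma xlog3_deriv: assumes "t > 0" shows "(xlog3 has_real_derivative (ln (3*t) + 1)) (at t)"
proof -
  have "((\<lambda>t. t * ln (3*t)) has_real_derivative (ln (3*t) + 1)) (at t)"
    using assms by (auto intro!: derivative_eq_intros simp: field_simps)
  then show ?thesis
    by (rule has_field_derivative_transform_within_open[where S="{0<..}"]) (use assms in \<open>auto simp: xlog3_def\<close>)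
qed

lemma G_deriv: assumes "t > 0" shows "(G b has_real_derivative Gd b t) (at t)"
proof -
  define c where "c = 1/b"
  have "((\<lambda>t. - 3/4 * t^2 + c * xlog3 t) has_real_derivative (- 3/4 * (2*t) + c * (ln (3*t) + 1))) (at t)"
    by (auto intro!: derivative_eq_intros xlog3_deriv[OF assms])
  then have "((\<lambda>t. - 3/4 * t^2 + (1/b) * xlog3 t) has_real_derivative (- 3/4 * (2*t) + (1/b) * (ln (3*t) + 1))) (at t)"
    by (simp add: c_def)
  then show ?thesis unfolding G_def[abs_def] Gd_def by (cases "b = 0") (simp_all add: field_simps)
qed

lemma xlog3_cont0: "continuous (at 0 within {0..}) xlog3"
proof -
  have "((\<lambda>x::real. x * ln (3*x)) \<longlongrightarrow> 0) (at_right 0)" by real_asymp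
  then have "(xlog3 \<longlongrightarrow> 0) (at_right 0)"
    by (rule Lim_transform_eventually) (auto simp: xlog3_def eventually_at_right_less)
  then have "(xlog3 \<longlongrightarrow> xlog3 0) (at 0 within {0<..})" by (simp add: xlog3_def)
  then have "(xlog3 \<longlongrightarrow> xlog3 0) (at 0 within {0..})"
    by (simp add: at_within_Ici_at_right)
  then show ?thesis by (simp add: continuous_within)
qed

lemma xlog3_cont: "continuous_on {0..} xlog3"
  unfolding continuous_on_eq_continuous_within
proof
  fix t :: real assume t: "t \<in> {0..}"
  show "continuous (at t within {0..}) xlog3"
  proof (cases "t = 0")
    case True then show ?thesis using xlog3_cont0 by simp
  next
    case False then have "t > 0" using t by auto
    then have "isCont xlog3 t" using xlog3_deriv DERIV_isCont by blast
    then show ?thesis by (simp add: continuous_at_imp_continuous_within)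
  qed
qed

lemma G_cont: "continuous_on {0..} (G b)"
  unfolding G_def[abs_def] by (intro continuous_intros xlog3_cont)

lemma coord_sum: "coord x 0 + coord x 1 + coord x 2 = 1"
  by (simp add: coord_def)

lemma coord_Xi: "x \<in> Xi \<Longrightarrow> k < 3 \<Longrightarrow> 0 \<le> coord x k"
  by (cases x) (auto simp: Xi_def coord_def)

lemma Xi_coord: "x \<in> Xi \<longleftrightarrow> 0 \<le> coord x 0 \<and> 0 \<le> coord x 1 \<and> 0 \<le> coord x 2"
  by (cases x) (auto simp: Xi_def coord_def)

lemma cont_coord: "continuous_on S (\<lambda>x. coord x k)"
  unfolding coord_def by (cases "k = 0"; cases "k = 1") (auto intro!: continuous_intros)

lemma F_cont: "continuous_on Xi (F b)"
proof -
  have "continuous_on Xi (\<lambda>x. G b (coord x 0) + G b (coord x 1) + G b (coord x 2) + 1/4)"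
    by (intro continuous_intros continuous_on_compose2[OF G_cont] cont_coord)
       (auto simp: Xi_coord)
  then show ?thesis by (simp add: F_G[abs_def])
qed

lemma Xi_closed: "closed Xi"
proof -
  have "Xi = {x. 0 \<le> fst x} \<inter> {x. 0 \<le> snd x} \<inter> {x. fst x + snd x \<le> 1}"
    by (auto simp: Xi_def)
  moreover have "closed {x::real\<times>real. 0 \<le> fst x}" "closed {x::real\<times>real. 0 \<le> snd x}"
    "closed {x::real\<times>real. fst x + snd x \<le> 1}"
    by (auto intro!: closed_Collect_le continuous_intros)
  ultimately show ?thesis by (metis closed_Int)
qed

lemma Xi_convex: "convex Xi"
  unfolding convex_def
proof (intro allI impI ballI)
  fix x y :: "real \<times> real" and u v :: real
  assume x: "x \<in> Xi" and y: "y \<in> Xi" and uv: "0 \<le> u" "0 \<le> v" "u + v = 1"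
  obtain a b c d where xy: "x = (a,b)" "y = (c,d)" by (cases x, cases y)
  have h: "0 \<le> a" "0 \<le> b" "a + b \<le> 1" "0 \<le> c" "0 \<le> d" "c + d \<le> 1"
    using x y xy by (auto simp: Xi_def)
  have "u * a + v * c + (u * b + v * d) = u * (a + b) + v * (c + d)" by (simp add: algebra_simps)
  also have "\<dots> \<le> u * 1 + v * 1" using h uv by (intro add_mono mult_left_mono) auto
  finally show "u *\<^sub>R x + v *\<^sub>R y \<in> Xi" using h uv xy by (auto simp: Xi_def)
qed

lemma Xi_bounded: "bounded Xi"
proof -
  have "Xi \<subseteq> cball 0 2"
  proof
    fix x assume "x \<in> Xi"
    then obtain a b where x: "x = (a,b)" "0 \<le> a" "0 \<le> b" "a + b \<le> 1" by (auto simp: Xi_def)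
    have "norm x \<le> norm (a,0::real) + norm (0::real, b)"
      using norm_triangle_ineq[of "(a,0::real)" "(0,b)"] x by simp
    also have "\<dots> \<le> 2" using x by (simp add: norm_Pair)
    finally show "x \<in> cball 0 2" by (simp add: dist_norm)
  qed
  then show ?thesis using bounded_cball bounded_subset by blast
qed

lemma Xi_compact: "compact Xi"
  using Xi_closed Xi_bounded compact_eq_bounded_closed by blast


definition LL :: "real \<Rightarrow> real" where "LL t = ln (1 - 2*t) - ln t"
definition NN :: "real \<Rightarrow> real" where "NN t = 3 * LL t - (1 - 3*t) / (t * (1 - 2*t))"

lemma f0_eq: "0 < t \<Longrightarrow> t < 1/2 \<Longrightarrow> t \<noteq> 1/3 \<Longrightarrow> f0 t = 2 / (3 * (1 - 3*t)) * LL t"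
  by (simp add: f0_def LL_def ln_div)

lemma LL_deriv: "0 < t \<Longrightarrow> t < 1/2 \<Longrightarrow> (LL has_real_derivative (- 1 / (t * (1 - 2*t)))) (at t)"
  unfolding LL_def[abs_def]
  by (auto intro!: derivative_eq_intros simp: field_simps)

lemma NN_deriv: assumes "0 < t" "t < 1/2"
  shows "(NN has_real_derivative ((3*t - 1) * (4*t - 1) / (t * (1 - 2*t))^2)) (at t)"
proof -
  have "t * (1 - 2*t) \<noteq> 0" using assms by auto
  have "((\<lambda>t. 3 * LL t - (1 - 3*t) / (t * (1 - 2*t))) has_real_derivative
     (3 * (- 1 / (t * (1 - 2*t))) - ((- 3) * (t * (1 - 2*t)) - (1 - 3*t) * (1 - 4*t)) / (t * (1 - 2*t))^2)) (at t)"
    using assms by (auto intro!: derivative_eq_intros LL_deriv simp: power2_eq_square algebra_simps)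
  moreover have "3 * (- 1 / (t * (1 - 2*t))) - ((- 3) * (t * (1 - 2*t)) - (1 - 3*t) * (1 - 4*t)) / (t * (1 - 2*t))^2
     = (3*t - 1) * (4*t - 1) / (t * (1 - 2*t))^2"
  proof -
    have gen: "\<And>D X::real. D \<noteq> 0 \<Longrightarrow> 3 * (- 1 / D) - ((- 3) * D - X) / D^2 = X / D^2"
      by (simp add: field_simps power2_eq_square)
    show ?thesis using gen[OF \<open>t * (1 - 2*t) \<noteq> 0\<close>, of "(1 - 3*t) * (1 - 4*t)"]
      by (simp add: algebra_simps)
  qed
  ultimately show ?thesis unfolding NN_def[abs_def] by simp
qed

lemma f0_deriv: assumes "0 < t" "t < 1/2" "t \<noteq> 1/3"
  shows "(f0 has_real_derivative (2/3 * NN t / (1 - 3*t)^2)) (at t)"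
proof -
  have u: "1 - 3*t \<noteq> 0" using assms by auto
  have D: "t * (1 - 2*t) \<noteq> 0" using assms by auto
  have h: "((\<lambda>t. 2 / (3 * (1 - 3*t))) has_real_derivative (2 / (1 - 3*t)^2)) (at t)"
  proof -
    have "((\<lambda>t. 2 / (3 * (1 - 3*t))) has_real_derivative
       ((0 * (3 * (1 - 3*t)) - 2 * (3 * (0 - 3 * 1))) / ((3 * (1 - 3*t)) * (3 * (1 - 3*t))))) (at t)"
      by (rule DERIV_divide) (use u in \<open>auto intro!: derivative_eq_intros\<close>)
    moreover have gen: "\<And>u::real. u \<noteq> 0 \<Longrightarrow> (0 * (3 * u) - 2 * (3 * (0 - 3 * 1))) / ((3 * u) * (3 * u)) = 2 / u^2"
      by (simp add: field_simps power2_eq_square)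
    ultimately show ?thesis using gen[OF u] by simp
  qed
  have "((\<lambda>t. 2 / (3 * (1 - 3*t)) * LL t) has_real_derivative
      (2 / (1 - 3*t)^2 * LL t + (- 1 / (t * (1 - 2*t))) * (2 / (3 * (1 - 3*t))))) (at t)"
    by (rule DERIV_mult[OF h LL_deriv]) (use assms in auto)
  moreover have "2 / (1 - 3*t)^2 * LL t + (- 1 / (t * (1 - 2*t))) * (2 / (3 * (1 - 3*t)))
      = 2/3 * NN t / (1 - 3*t)^2"
  proof -
    have gen: "\<And>u D L::real. u \<noteq> 0 \<Longrightarrow> D \<noteq> 0 \<Longrightarrow>
      2 / u^2 * L + (- 1 / D) * (2 / (3 * u)) = 2/3 * (3 * L - u / D) / u^2"
      by (simp add: field_simps power2_eq_square)
    show ?thesis unfolding NN_def by (rule gen[OF u D])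
  qed
  ultimately have "((\<lambda>t. 2 / (3 * (1 - 3*t)) * LL t) has_real_derivative (2/3 * NN t / (1 - 3*t)^2)) (at t)"
    by simp
  then show ?thesis
    by (rule has_field_derivative_transform_within_open[where S="{0<..<1/2} - {1/3}"])
       (use assms in \<open>auto simp: f0_eq\<close>)
qed

lemma ln_bounds: "0 < (y::real) \<Longrightarrow> 1 - 1/y \<le> ln y \<and> ln y \<le> y - 1"
proof -
  assume y: "0 < y"
  have "ln y \<le> y - 1" by (rule ln_le_minus_one[OF y])
  moreover have "ln (1/y) \<le> 1/y - 1" by (rule ln_le_minus_one) (use y in simp)
  ultimately show ?thesis using y by (simp add: ln_div)
qed

lemma f0_sandwich: assumes "0 < t" "t < 1/2"
  shows "min (2/(3*t)) (2/(3*(1-2*t))) \<le> f0 t \<and> f0 t \<le> max (2/(3*t)) (2/(3*(1-2*t)))"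
proof (cases "t = 1/3")
  case True then show ?thesis unfolding True by (simp add: f0_def)
next
  case False
  define y where "y = (1 - 2*t) / t"
  have y0: "0 < y" using assms by (simp add: y_def)
  have ym1: "y - 1 = (1 - 3*t) / t" using assms by (simp add: y_def field_simps)
  have f: "f0 t = 2/(3*t) * (ln y / (y - 1))"
    using assms False by (simp add: f0_def y_def ym1 field_simps)
  have lb: "1 - 1/y \<le> ln y" "ln y \<le> y - 1" using ln_bounds[OF y0] by auto
  have ty: "2/(3*t) * (1/y) = 2/(3*(1-2*t))" using assms y0 by (simp add: y_def field_simps)
  have c0: "0 \<le> 2/(3*t)" using assms by simp
  show ?thesis
  proof (cases "t < 1/3")
    case True
    then have y1: "y - 1 > 0" using ym1 assms by simp
    have r1: "ln y / (y - 1) \<le> 1" using lb y1 by (simp add: divide_le_eq)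
    have r2: "1 / y \<le> ln y / (y - 1)"
    proof -
      have "(y - 1) / y \<le> ln y" using lb y0 by (simp add: field_simps)
      then have "((y - 1) / y) / (y - 1) \<le> ln y / (y - 1)" using y1 by (intro divide_right_mono) auto
      moreover have "((y - 1) / y) / (y - 1) = 1 / y" using y1 by simp
      ultimately show ?thesis by simp
    qed
    have "f0 t \<le> 2/(3*t) * 1" unfolding f by (rule mult_left_mono[OF r1 c0])
    moreover have "2/(3*t) * (1/y) \<le> f0 t" unfolding f by (rule mult_left_mono[OF r2 c0])
    ultimately show ?thesis using ty by linarith
  next
    case False
    then have y1: "y - 1 < 0" using ym1 assms \<open>t \<noteq> 1/3\<close> by (simp add: divide_neg_pos)
    have r1: "1 \<le> ln y / (y - 1)" using lb y1 by (simp add: le_divide_eq)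
    have r2: "ln y / (y - 1) \<le> 1 / y"
    proof -
      have "(y - 1) / y \<le> ln y" using lb y0 by (simp add: field_simps)
      then have "ln y / (y - 1) \<le> ((y - 1) / y) / (y - 1)" using y1 by (intro divide_right_mono_neg) auto
      moreover have "((y - 1) / y) / (y - 1) = 1 / y" using y1 by simp
      ultimately show ?thesis by simp
    qed
    have "2/(3*t) * 1 \<le> f0 t" unfolding f by (rule mult_left_mono[OF r1 c0])
    moreover have "f0 t \<le> 2/(3*t) * (1/y)" unfolding f by (rule mult_left_mono[OF r2 c0])
    ultimately show ?thesis using ty by linarith
  qed
qed

lemma f0_isCont_third: "isCont f0 (1/3)"
proof -
  let ?A = "\<lambda>t::real. min (2/(3*t)) (2/(3*(1-2*t)))"
  let ?B = "\<lambda>t::real. max (2/(3*t)) (2/(3*(1-2*t)))"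
  have "eventually (\<lambda>t. t \<in> {0<..<1/2}) (at (1/3::real))"
    by (rule eventually_at_in_open') auto
  then have ev: "eventually (\<lambda>t. 0 < t \<and> t < 1/2) (at (1/3::real))" by simp
  have "(?A \<longlongrightarrow> ?A (1/3)) (at (1/3))" "(?B \<longlongrightarrow> ?B (1/3)) (at (1/3))"
    by (intro tendsto_intros; simp)+
  then have A: "(?A \<longlongrightarrow> 2) (at (1/3))" and B: "(?B \<longlongrightarrow> 2) (at (1/3))" by simp_all
  have "(f0 \<longlongrightarrow> 2) (at (1/3))"
    by (rule tendsto_sandwich[OF _ _ A B]) (use ev f0_sandwich in \<open>auto elim: eventually_mono\<close>)
  then show ?thesis by (simp add: isCont_def f0_def)
qed

lemma f0_isCont: "0 < t \<Longrightarrow> t < 1/2 \<Longrightarrow> isCont f0 t"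
  using f0_isCont_third f0_deriv DERIV_isCont by (cases "t = 1/3") blast+

lemma f0_cont: "{a..b} \<subseteq> {0<..<1/2} \<Longrightarrow> continuous_on {a..b} f0"
  by (intro continuous_at_imp_continuous_on ballI f0_isCont) auto


lemma NN_isCont: "0 < t \<Longrightarrow> t < 1/2 \<Longrightarrow> isCont NN t"
  using NN_deriv DERIV_isCont by blast

lemma NN_cont: "{a..b} \<subseteq> {0<..<1/2} \<Longrightarrow> continuous_on {a..b} NN"
  by (intro continuous_at_imp_continuous_on ballI NN_isCont) auto

lemma NN_third: "NN (1/3) = 0"
  by (simp add: NN_def LL_def)

lemma NN_small: "NN (1/100) < 0"
proof -
  have l: "LL (1/100) = ln 98"
  proof -
    have "ln (49 / 50) - ln (1 / 100) = ln ((49/50) / (1/100::real))"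
      by (subst ln_div) auto
    then show ?thesis by (simp add: LL_def)
  qed
  have "ln 98 = 2 * ln (sqrt 98)" by (simp add: ln_sqrt)
  also have "\<dots> \<le> 2 * (sqrt 98 - 1)" using ln_le_minus_one[of "sqrt 98"] by simp
  also have "sqrt 98 < 10"
    by (rule real_less_lsqrt) auto
  then have "2 * (sqrt 98 - 1) < (18::real)" by simp
  finally have "ln 98 < (18::real)" .
  then show ?thesis unfolding NN_def l by simp
qed

lemma NN_inc1: assumes "0 < a" "a < b" "b \<le> 1/4" shows "NN a < NN b"
proof (rule DERIV_pos_imp_increasing_open[where f=NN, OF assms(2)])
  fix x assume x: "a < x" "x < b"
  have "0 < (3*x - 1) * (4*x - 1) / (x * (1 - 2*x))^2"
    using x assms by (intro divide_pos_pos mult_neg_neg) auto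
  then show "\<exists>y. DERIV NN x :> y \<and> 0 < y" using NN_deriv[of x] x assms by auto
qed (use assms in \<open>intro NN_cont; auto\<close>)

lemma NN_dec2: assumes "1/4 \<le> a" "a < b" "b \<le> 1/3" shows "NN b < NN a"
proof (rule DERIV_neg_imp_decreasing_open[where f=NN, OF assms(2)])
  fix x assume x: "a < x" "x < b"
  have "(3*x - 1) * (4*x - 1) < 0" using x assms by (intro mult_neg_pos) auto
  then have "(3*x - 1) * (4*x - 1) / (x * (1 - 2*x))^2 < 0"
    using x assms by (intro divide_neg_pos) auto
  then show "\<exists>y. DERIV NN x :> y \<and> y < 0" using NN_deriv[of x] x assms by auto
qed (use assms in \<open>intro NN_cont; auto\<close>)

lemma NN_inc3: assumes "1/3 \<le> a" "a < b" "b < 1/2" shows "NN a < NN b"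
proof (rule DERIV_pos_imp_increasing_open[where f=NN, OF assms(2)])
  fix x assume x: "a < x" "x < b"
  have "0 < (3*x - 1) * (4*x - 1) / (x * (1 - 2*x))^2"
    using x assms by (intro divide_pos_pos mult_pos_pos) auto
  then show "\<exists>y. DERIV NN x :> y \<and> 0 < y" using NN_deriv[of x] x assms by auto
qed (use assms in \<open>intro NN_cont; auto\<close>)

lemma NN_pos: "1/4 \<le> t \<Longrightarrow> t < 1/2 \<Longrightarrow> t \<noteq> 1/3 \<Longrightarrow> 0 < NN t"
  using NN_dec2[of t "1/3"] NN_inc3[of "1/3" t] NN_third by (cases "t < 1/3") auto

definition zz :: real where "zz = (THE t. 0 < t \<and> t < 1/4 \<and> NN t = 0)"

lemma zz_props: "1/100 < zz" "zz < 1/4" "NN zz = 0"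
  "\<And>t. 0 < t \<Longrightarrow> t < zz \<Longrightarrow> NN t < 0"
  "\<And>t. zz < t \<Longrightarrow> t < 1/2 \<Longrightarrow> t \<noteq> 1/3 \<Longrightarrow> 0 < NN t"
proof -
  have p4: "0 < NN (1/4)" using NN_pos by simp
  have "continuous_on {1/100..1/4} NN" by (rule NN_cont) auto
  then obtain z where z: "1/100 \<le> z" "z \<le> 1/4" "NN z = 0"
    using IVT'[of NN "1/100" 0 "1/4"] NN_small p4 by auto
  have z1: "z < 1/4" using z p4 by (cases "z = 1/4") auto
  have z0: "1/100 < z" using z NN_small by (cases "z = 1/100") auto
  have uniq: "t = z" if "0 < t" "t < 1/4" "NN t = 0" for t
    using NN_inc1[of t z] NN_inc1[of z t] that z z0 z1 by (cases t z rule: linorder_cases) auto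
  have "zz = z" unfolding zz_def
    by (rule the_equality) (use z z0 z1 uniq in auto)
  then show "1/100 < zz" "zz < 1/4" "NN zz = 0" using z z0 z1 by auto
  show "\<And>t. 0 < t \<Longrightarrow> t < zz \<Longrightarrow> NN t < 0"
    using NN_inc1 z z1 \<open>zz = z\<close> by fastforce
  show "\<And>t. zz < t \<Longrightarrow> t < 1/2 \<Longrightarrow> t \<noteq> 1/3 \<Longrightarrow> 0 < NN t"
  proof -
    fix t assume t: "zz < t" "t < 1/2" "t \<noteq> 1/3"
    show "0 < NN t"
    proof (cases "t < 1/4")
      case True then show ?thesis using NN_inc1[of z t] z z0 t \<open>zz = z\<close> by auto
    next
      case False then show ?thesis using NN_pos t by auto
    qed
  qed
qed


lemma f0_dec: assumes "0 < a" "a < b" "b \<le> zz" shows "f0 b < f0 a"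
proof (rule DERIV_neg_imp_decreasing_open[where f=f0, OF assms(2)])
  fix x assume x: "a < x" "x < b"
  have x3: "x \<noteq> 1/3" "x < 1/2" using x assms zz_props(2) by auto
  have "2/3 * NN x / (1 - 3*x)^2 < 0"
    using x assms zz_props(4)[of x] x3 by (intro divide_neg_pos) auto
  then show "\<exists>y. DERIV f0 x :> y \<and> y < 0" using f0_deriv[of x] x assms x3 by auto
qed (use assms zz_props(2) in \<open>intro f0_cont; auto\<close>)

lemma f0_inc_aux: assumes "zz \<le> a" "a < b" "b < 1/2" "b \<le> 1/3 \<or> 1/3 \<le> a" shows "f0 a < f0 b"
proof (rule DERIV_pos_imp_increasing_open[where f=f0, OF assms(2)])
  fix x assume x: "a < x" "x < b"
  have x3: "x \<noteq> 1/3" "0 < x" using x assms zz_props(1) by auto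
  have "0 < 2/3 * NN x / (1 - 3*x)^2"
    using x assms zz_props(5)[of x] x3 by (intro divide_pos_pos) auto
  then show "\<exists>y. DERIV f0 x :> y \<and> 0 < y" using f0_deriv[of x] x assms x3 by auto
qed (use assms zz_props(1) in \<open>intro f0_cont; auto\<close>)

lemma f0_inc: assumes "zz \<le> a" "a < b" "b < 1/2" shows "f0 a < f0 b"
proof (cases "b \<le> 1/3 \<or> 1/3 \<le> a")
  case True then show ?thesis using f0_inc_aux assms by blast
next
  case False
  then have "f0 a < f0 (1/3)" "f0 (1/3) < f0 b"
    using f0_inc_aux[of a "1/3"] f0_inc_aux[of "1/3" b] assms by auto
  then show ?thesis by simp
qed

lemma f0_min: "0 < t \<Longrightarrow> t < 1/2 \<Longrightarrow> t \<noteq> zz \<Longrightarrow> f0 zz < f0 t"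
  using f0_dec[of t zz] f0_inc[of zz t] by (cases t zz rule: linorder_cases) auto

lemma m0_eq: "m0 = zz"
  unfolding m0_def
proof (rule the_equality)
  show "zz \<in> {0<..<1/2} \<and> (\<forall>s\<in>{0<..<1/2}. f0 zz \<le> f0 s)"
    using zz_props(1,2) f0_min by (force simp: less_imp_le)
next
  fix t assume t: "t \<in> {0<..<1/2} \<and> (\<forall>s\<in>{0<..<1/2}. f0 t \<le> f0 s)"
  show "t = zz"
  proof (rule ccontr)
    assume "t \<noteq> zz"
    then have "f0 zz < f0 t" using f0_min[of t] t by auto
    moreover have "f0 t \<le> f0 zz" using t zz_props(1,2) by auto
    ultimately show False by simp
  qed
qed

lemma m0_bounds: "1/100 < m0" "m0 < 1/4"
  using zz_props m0_eq by auto

lemma beta3_eq: "beta3 = f0 m0" by (simp add: beta3_def)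

lemma f0_third: "f0 (1/3) = 2" by (simp add: f0_def)

lemma beta3_lt2: "beta3 < 2"
  using f0_inc[of zz "1/3"] zz_props(2) m0_eq beta3_eq f0_third by simp

lemma f0_pos: assumes "0 < t" "t < 1/2" shows "0 < f0 t"
proof -
  have "0 < 2/(3*t)" "0 < 2/(3*(1-2*t))" using assms by auto
  then have "0 < min (2/(3*t)) (2/(3*(1-2*t)))" by simp
  then show ?thesis using f0_sandwich[OF assms] by linarith
qed

lemma beta3_pos: "0 < beta3"
  using f0_pos[of m0] m0_bounds beta3_eq by simp

lemma f0_big_left: "\<exists>t. 0 < t \<and> t < m0 \<and> b < f0 t"
proof -
  define t where "t = min (1/200) (exp (- 2 * \<bar>b\<bar> - 2) / 2)"
  have t0: "0 < t" "t \<le> 1/200" "t \<le> exp (- 2 * \<bar>b\<bar> - 2) / 2" by (auto simp: t_def)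
  have tm: "t < m0" using t0 m0_bounds by simp
  have "ln (2*t) \<le> - 2 * \<bar>b\<bar> - 2"
  proof -
    have "ln (2*t) \<le> ln (exp (- 2 * \<bar>b\<bar> - 2))" using t0 by (subst ln_le_cancel_iff) auto
    then show ?thesis by simp
  qed
  moreover have "ln (1 / (2*t)) \<le> LL t"
  proof -
    have "1 / (2*t) \<le> (1 - 2*t) / t" using t0 by (simp add: field_simps)
    then have "ln (1 / (2*t)) \<le> ln ((1 - 2*t) / t)" using t0 by (subst ln_le_cancel_iff) auto
    then show ?thesis using t0 by (simp add: LL_def ln_div)
  qed
  moreover have "ln (1 / (2*t)) = - ln (2*t)" using t0 by (simp add: ln_div)
  ultimately have LLb: "2 * \<bar>b\<bar> + 2 \<le> LL t" by linarith
  have f: "f0 t = 2 / (3 * (1 - 3*t)) * LL t" using t0 by (intro f0_eq) auto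
  have "2/3 * LL t \<le> 2 / (3 * (1 - 3*t)) * LL t"
  proof (rule mult_right_mono)
    show "2/3 \<le> 2 / (3 * (1 - 3*t))" using t0 by (simp add: field_simps)
  qed (use LLb in auto)
  then have "b < f0 t" using f LLb by linarith
  then show ?thesis using t0 tm by blast
qed

lemma f0_big_right: "\<exists>t. m0 < t \<and> t < 1/2 \<and> b < f0 t"
proof -
  define s where "s = min (1/10) (exp (- \<bar>b\<bar> - 3))"
  have s0: "0 < s" "s \<le> 1/10" "s \<le> exp (- \<bar>b\<bar> - 3)" by (auto simp: s_def)
  define t where "t = (1 - s) / 2"
  have t0: "9/20 \<le> t" "t < 1/2" "1 - 2*t = s" using s0 by (auto simp: t_def field_simps)
  have tm: "m0 < t" using t0 m0_bounds by simp
  have "ln s \<le> - \<bar>b\<bar> - 3"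
  proof -
    have "ln s \<le> ln (exp (- \<bar>b\<bar> - 3))" using s0 by (subst ln_le_cancel_iff) auto
    then show ?thesis by simp
  qed
  moreover have "-2 \<le> ln t"
  proof -
    have "1 - 1/t \<le> ln t" using ln_bounds[of t] t0 by auto
    moreover have "-2 \<le> 1 - 1/t" using t0 by (simp add: field_simps)
    ultimately show ?thesis by linarith
  qed
  ultimately have LLb: "\<bar>b\<bar> + 1 \<le> - LL t" using t0 by (simp add: LL_def)
  have f: "f0 t = 2 / (3 * (1 - 3*t)) * LL t" using t0 by (intro f0_eq) auto
  have f': "f0 t = 2 / (3 * (3*t - 1)) * (- LL t)" unfolding f using t0
    by (simp add: field_simps)
  have "4/3 * (- LL t) \<le> 2 / (3 * (3*t - 1)) * (- LL t)"
  proof (rule mult_right_mono)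
    show "4/3 \<le> 2 / (3 * (3*t - 1))" using t0 by (simp add: field_simps)
  qed (use LLb in auto)
  then have "b < f0 t" using f' LLb by linarith
  then show ?thesis using t0 tm by blast
qed

lemma p_props: assumes "beta3 < b"
  shows "0 < p_beta b" "p_beta b < m0" "f0 (p_beta b) = b"
proof -
  obtain t1 where t1: "0 < t1" "t1 < m0" "b < f0 t1" using f0_big_left by blast
  have "continuous_on {t1..m0} f0" using t1 m0_bounds by (intro f0_cont) auto
  then obtain x where x: "t1 \<le> x" "x \<le> m0" "f0 x = b"
    using IVT2'[of f0 m0 b t1] t1 assms beta3_eq by auto
  have xm: "x < m0" using x assms beta3_eq by (cases "x = m0") auto
  have "p_beta b = x" unfolding p_beta_def
  proof (rule the_equality)
    show "0 < x \<and> x < m0 \<and> f0 x = b" using x xm t1 by auto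
  next
    fix t assume t: "0 < t \<and> t < m0 \<and> f0 t = b"
    show "t = x"
      using f0_dec[of t x] f0_dec[of x t] t x xm t1 m0_eq by (cases t x rule: linorder_cases) auto
  qed
  then show "0 < p_beta b" "p_beta b < m0" "f0 (p_beta b) = b" using x xm t1 by auto
qed

lemma q_props: assumes "beta3 < b"
  shows "m0 < q_beta b" "q_beta b < 1/2" "f0 (q_beta b) = b"
proof -
  obtain t1 where t1: "m0 < t1" "t1 < 1/2" "b < f0 t1" using f0_big_right by blast
  have "continuous_on {m0..t1} f0" using t1 m0_bounds by (intro f0_cont) auto
  then obtain x where x: "m0 \<le> x" "x \<le> t1" "f0 x = b"
    using IVT'[of f0 m0 b t1] t1 assms beta3_eq by auto
  have xm: "m0 < x" using x assms beta3_eq by (cases "x = m0") auto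
  have "q_beta b = x" unfolding q_beta_def
  proof (rule the_equality)
    show "m0 < x \<and> x < 1/2 \<and> f0 x = b" using x xm t1 by auto
  next
    fix t assume t: "m0 < t \<and> t < 1/2 \<and> f0 t = b"
    show "t = x"
      using f0_inc[of t x] f0_inc[of x t] t x xm t1 m0_eq by (cases t x rule: linorder_cases) auto
  qed
  then show "m0 < q_beta b" "q_beta b < 1/2" "f0 (q_beta b) = b" using x xm t1 by auto
qed

lemma f0_sol: assumes "beta3 < b" "0 < t" "t < 1/2" "f0 t = b"
  shows "t = p_beta b \<or> t = q_beta b"
proof -
  note p = p_props[OF assms(1)] and q = q_props[OF assms(1)]
  have "t \<noteq> m0" using assms beta3_eq by auto
  then consider "t < m0" | "m0 < t" by linarith
  then show ?thesis
  proof cases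
    case 1
    then show ?thesis using f0_dec[of t "p_beta b"] f0_dec[of "p_beta b" t] p assms m0_eq
      by (cases t "p_beta b" rule: linorder_cases) auto
  next
    case 2
    then show ?thesis using f0_inc[of t "q_beta b"] f0_inc[of "q_beta b" t] q assms m0_eq
      by (cases t "q_beta b" rule: linorder_cases) auto
  qed
qed

lemma f0_less: assumes "beta3 < b" "p_beta b < t" "t < q_beta b" shows "f0 t < b"
proof -
  note p = p_props[OF assms(1)] and q = q_props[OF assms(1)]
  consider "t < m0" | "t = m0" | "m0 < t" by linarith
  then show ?thesis
  proof cases
    case 1 then show ?thesis using f0_dec[of "p_beta b" t] p assms m0_eq by auto
  next
    case 2 then show ?thesis using assms beta3_eq by simp
  next
    case 3 then show ?thesis using f0_inc[of t "q_beta b"] q assms m0_eq by auto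
  qed
qed

lemma f0_greater1: assumes "beta3 < b" "0 < t" "t < p_beta b" shows "b < f0 t"
  using f0_dec[of t "p_beta b"] p_props[OF assms(1)] assms m0_eq by auto

lemma f0_greater2: assumes "beta3 < b" "q_beta b < t" "t < 1/2" shows "b < f0 t"
  using f0_inc[of "q_beta b" t] q_props[OF assms(1)] assms m0_eq by auto

lemma q_two: "q_beta 2 = 1/3"
  using f0_sol[of 2 "1/3"] beta3_lt2 f0_third p_props[of 2] m0_bounds by auto

lemma q_ge_third: assumes "2 \<le> b" "beta3 < b" shows "1/3 \<le> q_beta b"
proof (rule ccontr)
  assume "\<not> 1/3 \<le> q_beta b"
  then have "b < f0 (1/3)" using f0_greater2[of b "1/3"] assms by auto
  then show False using f0_third assms by simp
qed

lemma q_gt_third: assumes "2 < b" "beta3 < b" shows "1/3 < q_beta b"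
proof -
  have "q_beta b \<noteq> 1/3"
  proof
    assume "q_beta b = 1/3"
    then have "f0 (1/3) = b" using q_props(3)[OF assms(2)] by metis
    then show False using f0_third assms by simp
  qed
  then show ?thesis using q_ge_third[of b] assms by auto
qed

lemma q_lt_third: assumes "b < 2" "beta3 < b" shows "q_beta b < 1/3"
proof (rule ccontr)
  assume "\<not> q_beta b < 1/3"
  then consider "q_beta b = 1/3" | "1/3 < q_beta b" by linarith
  then show False
  proof cases
    case 1
    then have "f0 (1/3) = b" using q_props(3)[OF assms(2)] by metis
    then show False using f0_third assms by simp
  next
    case 2
    then have "f0 (1/3) < b" using f0_less[of b "1/3"] p_props[OF assms(2)] m0_bounds assms by auto
    then show False using f0_third assms by simp
  qed
qed

lemma p_lt: "beta3 < b \<Longrightarrow> p_beta b < 1/4"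
  using p_props[of b] m0_bounds by auto


lemma ln_lt_minus_one: assumes "0 < (y::real)" "y \<noteq> 1" shows "ln y < y - 1"
proof -
  have "ln y = 2 * ln (sqrt y)" using assms by (simp add: ln_sqrt)
  also have "\<dots> \<le> 2 * (sqrt y - 1)" using ln_le_minus_one[of "sqrt y"] assms by simp
  also have "\<dots> < y - 1"
  proof -
    have "sqrt y \<noteq> 1" using assms by simp
    then have "0 < (sqrt y - 1)^2" by simp
    then show ?thesis using assms by (simp add: power2_eq_square algebra_simps)
  qed
  finally show ?thesis .
qed

lemma tf0_lt: assumes "0 < t" "t < 1/3" shows "t * f0 t < 2/3"
proof -
  define y where "y = (1 - 2*t) / t"
  have y: "0 < y" "y \<noteq> 1" "y - 1 = (1 - 3*t) / t" using assms by (auto simp: y_def field_simps)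
  have LL: "LL t = ln y" using assms by (simp add: LL_def y_def ln_div)
  have "t * f0 t = 2 * t / (3 * (1 - 3*t)) * ln y" using assms by (simp add: f0_eq LL)
  also have "\<dots> < 2 * t / (3 * (1 - 3*t)) * (y - 1)"
    using ln_lt_minus_one[OF y(1,2)] assms by (intro mult_strict_left_mono) auto
  also have "\<dots> = 2/3" using assms by (simp add: y(3) field_simps)
  finally show ?thesis .
qed

lemma tf0_gt: assumes "1/3 < t" "t < 1/2" shows "2/3 < t * f0 t"
proof -
  define y where "y = (1 - 2*t) / t"
  have y: "0 < y" "y \<noteq> 1" "y - 1 = (1 - 3*t) / t" using assms by (auto simp: y_def field_simps)
  have LL: "LL t = ln y" using assms by (simp add: LL_def y_def ln_div)
  have "2/3 = 2 * t / (3 * (1 - 3*t)) * (y - 1)" using assms by (simp add: y(3) field_simps)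
  also have "\<dots> < 2 * t / (3 * (1 - 3*t)) * ln y"
    using ln_lt_minus_one[OF y(1,2)] assms by (intro mult_strict_left_mono_neg) (auto simp: divide_pos_neg)
  also have "\<dots> = t * f0 t" using assms by (simp add: f0_eq LL)
  finally show ?thesis .
qed

lemma Gd_axis: assumes "0 < a" "a < 1/2" "0 < b"
  shows "Gd b a - Gd b (1 - 2*a) = 3/2 * (1 - 3*a) * (1 - f0 a / b)"
proof (cases "a = 1/3")
  case True then show ?thesis unfolding True by (simp add: Gd_def)
next
  case False
  have l1: "ln (3*a) = ln 3 + ln a" using assms by (intro ln_mult_pos) auto
  have l2: "ln (3*(1 - 2*a)) = ln 3 + ln (1 - 2*a)" using assms by (intro ln_mult_pos) auto
  have "ln (3*a) - ln (3 * (1 - 2*a)) = - LL a" unfolding l1 l2 by (simp add: LL_def)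
  moreover have gen: "\<And>A B L. A - B = - L \<Longrightarrow>
      (- 3/2 * a + (A + 1) / b) - (- 3/2 * (1 - 2*a) + (B + 1) / b) = 3/2 * (1 - 3*a) - L / b"
  proof -
    fix A B L :: real assume "A - B = - L"
    then have "B = A + L" by simp
    then show "(- 3/2 * a + (A + 1) / b) - (- 3/2 * (1 - 2*a) + (B + 1) / b) = 3/2 * (1 - 3*a) - L / b"
      using assms by (simp add: field_simps)
  qed
  ultimately have "Gd b a - Gd b (1 - 2*a) = 3/2 * (1 - 3*a) - LL a / b"
    unfolding Gd_def by blast
  moreover have "3/2 * (1 - 3*a) * f0 a = LL a" using assms False by (simp add: f0_eq)
  ultimately show ?thesis using assms by (simp add: field_simps)
qed

definition phi :: "real \<Rightarrow> real \<Rightarrow> real" where "phi b a = 2 * G b a + G b (1 - 2*a)"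

lemma phi_deriv: assumes "0 < a" "a < 1/2" "0 < b"
  shows "(phi b has_real_derivative (3 * ((1 - 3*a) * (1 - f0 a / b)))) (at a)"
proof -
  have d1: "(G b has_real_derivative Gd b a) (at a)" using G_deriv assms by auto
  have d2: "(G b has_real_derivative Gd b (1 - 2*a)) (at (1 - 2*a))" using G_deriv assms by auto
  have d3: "((\<lambda>a. 1 - 2*a) has_real_derivative (0 - 2 * 1)) (at a)"
    by (intro derivative_eq_intros) auto
  have d4: "((\<lambda>a. G b (1 - 2*a)) has_real_derivative Gd b (1 - 2*a) * (0 - 2 * 1)) (at a)"
    using DERIV_chain2[where f="G b" and g="\<lambda>a. 1 - 2*a", OF d2 d3] by simp
  have deriv: "((\<lambda>a. 2 * G b a + G b (1 - 2*a)) has_real_derivative (2 * Gd b a + Gd b (1 - 2*a) * (0 - 2 * 1))) (at a)"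
    by (rule DERIV_add[OF DERIV_cmult[OF d1] d4])
  have "2 * Gd b a + Gd b (1 - 2*a) * (0 - 2 * 1) = 2 * (Gd b a - Gd b (1 - 2*a))"
    by (simp add: algebra_simps)
  moreover have "2 * (Gd b a - Gd b (1 - 2*a)) = 3 * ((1 - 3*a) * (1 - f0 a / b))"
    unfolding Gd_axis[OF assms] by simp
  ultimately have eqtot: "2 * Gd b a + Gd b (1 - 2*a) * (0 - 2 * 1) = 3 * ((1 - 3*a) * (1 - f0 a / b))"
    by simp
  show ?thesis unfolding phi_def[abs_def] using deriv by (simp only: eqtot)
qed

lemma phi_cont: "0 \<le> a1 \<Longrightarrow> a2 \<le> 1/2 \<Longrightarrow> continuous_on {a1..a2} (phi b)"
  unfolding phi_def[abs_def]
  by (intro continuous_intros continuous_on_compose2[OF G_cont]) auto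

lemma phi_inc: assumes "0 < a1" "a1 < a2" "a2 \<le> 1/2" "0 < b"
  and "\<And>a. a1 < a \<Longrightarrow> a < a2 \<Longrightarrow> 0 < (1 - 3*a) * (1 - f0 a / b)"
  shows "phi b a1 < phi b a2"
proof (rule DERIV_pos_imp_increasing_open[where f="phi b", OF assms(2)])
  fix x assume x: "a1 < x" "x < a2"
  have "0 < 3 * ((1 - 3*x) * (1 - f0 x / b))" using assms(5)[OF x] by linarith
  then show "\<exists>y. DERIV (phi b) x :> y \<and> 0 < y" using phi_deriv[of x b] x assms by auto
qed (use assms in \<open>intro phi_cont; auto\<close>)

lemma phi_dec: assumes "0 < a1" "a1 < a2" "a2 \<le> 1/2" "0 < b"
  and "\<And>a. a1 < a \<Longrightarrow> a < a2 \<Longrightarrow> (1 - 3*a) * (1 - f0 a / b) < 0"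
  shows "phi b a2 < phi b a1"
proof (rule DERIV_neg_imp_decreasing_open[where f="phi b", OF assms(2)])
  fix x assume x: "a1 < x" "x < a2"
  have "3 * ((1 - 3*x) * (1 - f0 x / b)) < 0" using assms(5)[OF x] by linarith
  then show "\<exists>y. DERIV (phi b) x :> y \<and> y < 0" using phi_deriv[of x b] x assms by auto
qed (use assms in \<open>intro phi_cont; auto\<close>)

lemma sgn_lemma: "0 < (b::real) \<Longrightarrow> (f < b \<longleftrightarrow> 0 < 1 - f / b)" "0 < (b::real) \<Longrightarrow> (b < f \<longleftrightarrow> 1 - f / b < 0)"
proof -
  assume b: "0 < b"
  have "1 - f / b = (b - f) / b" using b by (simp add: field_simps)
  then show "(f < b \<longleftrightarrow> 0 < 1 - f / b)" "(b < f \<longleftrightarrow> 1 - f / b < 0)"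
    using b by (simp_all add: zero_less_divide_iff divide_less_0_iff)
qed

lemma phi_P1: assumes "beta3 < b" "p_beta b \<le> a1" "a1 < a2" "a2 \<le> q_beta b" "a2 \<le> 1/3"
  shows "phi b a1 < phi b a2"
  using assms p_props[OF assms(1)] beta3_pos
  by (intro phi_inc) (auto intro!: mult_pos_pos f0_less simp: sgn_lemma(1)[symmetric])

lemma phi_P2: assumes "beta3 < b" "q_beta b \<le> a1" "a1 < a2" "a2 \<le> 1/3"
  shows "phi b a2 < phi b a1"
  using assms q_props[OF assms(1)] beta3_pos m0_bounds
  by (intro phi_dec) (auto intro!: mult_pos_neg f0_greater2 simp: sgn_lemma(2)[symmetric])

lemma phi_P3: assumes "beta3 < b" "1/3 \<le> a1" "a1 < a2" "a2 \<le> q_beta b"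
  shows "phi b a2 < phi b a1"
  using assms q_props[OF assms(1)] p_props[OF assms(1)] beta3_pos m0_bounds
  by (intro phi_dec) (auto intro!: mult_neg_pos f0_less simp: sgn_lemma(1)[symmetric])

lemma phi_P4: assumes "beta3 < b" "q_beta b \<le> a1" "1/3 \<le> a1" "a1 < a2" "a2 \<le> 1/2"
  shows "phi b a1 < phi b a2"
  using assms q_props[OF assms(1)] beta3_pos m0_bounds
  by (intro phi_inc) (auto intro!: mult_neg_neg f0_greater2 simp: sgn_lemma(2)[symmetric])


lemma ln_ratio_lower: assumes "0 < (x::real)" "x < 1" shows "2 * x < ln (1 + x) - ln (1 - x)"
proof -
  let ?h = "\<lambda>x::real. ln (1 + x) - ln (1 - x) - 2 * x"
  have "?h 0 < ?h x"
  proof (rule DERIV_pos_imp_increasing_open[where f="?h", OF assms(1)])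
    fix y :: real assume y: "0 < y" "y < x"
    have nz: "1 - y * y \<noteq> 0" "1 + y \<noteq> 0" "1 - y \<noteq> 0" using y assms
      by (auto simp: algebra_simps) (metis less_trans mult_strict_mono' less_eq_real_def mult_1 y(1) less_irrefl)
    have d: "(?h has_real_derivative (1 / (1 + y) + 1 / (1 - y) - 2)) (at y)"
      using y assms nz by (auto intro!: derivative_eq_intros simp: field_simps)
    have y2: "y^2 < 1" using y assms by (simp add: power2_eq_square) (metis less_trans mult_strict_mono' less_eq_real_def mult_1 y(1))
    have "1 / (1 + y) + 1 / (1 - y) - 2 = 2 * y^2 / (1 - y^2)"
    proof -
      have "1 - y^2 = (1 + y) * (1 - y)" by (simp add: power2_eq_square algebra_simps)
      then show ?thesis using y assms nz by (simp add: field_simps power2_eq_square)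
    qed
    moreover have "0 < 2 * y^2 / (1 - y^2)" using y2 y by simp
    ultimately show "\<exists>d. DERIV ?h y :> d \<and> 0 < d" using d by auto
  next
    show "continuous_on {0..x} ?h" using assms
      by (intro continuous_intros continuous_on_ln) auto
  qed
  then show ?thesis by simp
qed

lemma ln_ratio_upper: assumes "0 \<le> (x::real)" "x < 1" shows "ln (1 + x) - ln (1 - x) \<le> x + x / (1 - x)"
proof -
  have "ln (1 + x) \<le> x" using ln_le_minus_one[of "1 + x"] assms by simp
  moreover have "ln (1 / (1 - x)) \<le> 1 / (1 - x) - 1" using ln_le_minus_one[of "1 / (1 - x)"] assms by simp
  moreover have "ln (1 / (1 - x)) = - ln (1 - x)" using assms by (simp add: ln_div)
  moreover have "1 / (1 - x) - 1 = x / (1 - x)" using assms by (simp add: field_simps)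
  ultimately show ?thesis by linarith
qed

lemma k_deriv: assumes "0 < c" "0 < u" "u < c" "0 < b"
  shows "((\<lambda>u. G b (c + u) + G b (c - u)) has_real_derivative
     (- 3 * u + (ln (1 + u/c) - ln (1 - u/c)) / b)) (at u)"
proof -
  have d1: "(G b has_real_derivative Gd b (c + u)) (at (c + u))" using G_deriv assms by auto
  have d2: "(G b has_real_derivative Gd b (c - u)) (at (c - u))" using G_deriv assms by auto
  have e1: "((\<lambda>u. c + u) has_real_derivative 1) (at u)" by (auto intro!: derivative_eq_intros)
  have e2: "((\<lambda>u. c - u) has_real_derivative -1) (at u)" by (auto intro!: derivative_eq_intros)
  have "((\<lambda>u. G b (c + u) + G b (c - u)) has_real_derivative (Gd b (c + u) * 1 + Gd b (c - u) * -1)) (at u)"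
    by (rule DERIV_add[OF DERIV_chain2[where f="G b", OF d1 e1] DERIV_chain2[where f="G b", OF d2 e2]])
  moreover have "Gd b (c + u) * 1 + Gd b (c - u) * -1 = - 3 * u + (ln (1 + u/c) - ln (1 - u/c)) / b"
  proof -
    have "3 * (c + u) = (3*c) * (1 + u/c)" using assms by (simp add: field_simps)
    then have l1: "ln (3 * (c + u)) = ln (3*c) + ln (1 + u/c)"
      using assms by (simp only:) (rule ln_mult_pos, auto simp: field_simps)
    have "3 * (c - u) = (3*c) * (1 - u/c)" using assms by (simp add: field_simps)
    then have l2: "ln (3 * (c - u)) = ln (3*c) + ln (1 - u/c)"
      using assms by (simp only:) (rule ln_mult_pos, auto simp: field_simps)
    have "Gd b (c + u) * 1 + Gd b (c - u) * -1 = - 3 * u + (ln (3 * (c + u)) - ln (3 * (c - u))) / b"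
      unfolding Gd_def using assms by (simp add: field_simps)
    also have "\<dots> = - 3 * u + (ln (1 + u/c) - ln (1 - u/c)) / b" unfolding l1 l2 by simp
    finally show ?thesis .
  qed
  ultimately show ?thesis by simp
qed

lemma k_cont: assumes "0 \<le> s" "s \<le> c" shows "continuous_on {0..s} (\<lambda>u. G b (c + u) + G b (c - u))"
  using assms by (intro continuous_intros continuous_on_compose2[OF G_cont]) auto

lemma transverse_up: assumes "0 < c" "0 < b" "c * b < 2/3" "0 < s" "s \<le> c"
  shows "2 * G b c < G b (c + s) + G b (c - s)"
proof -
  have "G b (c + 0) + G b (c - 0) < G b (c + s) + G b (c - s)"
  proof (rule DERIV_pos_imp_increasing_open[where f="\<lambda>u. G b (c + u) + G b (c - u)", OF assms(4)])
    fix u assume u: "0 < u" "u < s"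
    have x: "0 < u/c" "u/c < 1" using u assms by auto
    have "2 * (u/c) / b < (ln (1 + u/c) - ln (1 - u/c)) / b"
      using ln_ratio_lower[OF x] assms by (intro divide_strict_right_mono) auto
    moreover have "3 * u < 2 * (u/c) / b"
    proof -
      have "3 * (c * b) < 2" using assms by simp
      then have "3 * u * (c * b) < 2 * u" using u by simp
      then show ?thesis using assms by (simp add: field_simps)
    qed
    ultimately have "0 < - 3 * u + (ln (1 + u/c) - ln (1 - u/c)) / b" by linarith
    then show "\<exists>y. ((\<lambda>u. G b (c + u) + G b (c - u)) has_real_derivative y) (at u) \<and> 0 < y"
      using k_deriv[of c u b] u assms by auto
  qed (rule k_cont, use assms in auto)
  then show ?thesis by simp
qed

lemma transverse_down: assumes "0 < c" "0 < b" "2/3 < c * b"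
  shows "\<exists>s0>0. s0 < c \<and> (\<forall>s. 0 < s \<and> s \<le> s0 \<longrightarrow> G b (c + s) + G b (c - s) < 2 * G b c)"
proof -
  define x0 where "x0 = (3*c*b - 2) / (2 * (3*c*b - 1))"
  define K where "K = 3*c*b"
  have K: "2 < K" using assms by (simp add: K_def)
  have x0K: "x0 = (K - 2) / (2 * (K - 1))" by (simp add: x0_def K_def)
  have x0: "0 < x0" "x0 < 1/2" using K unfolding x0K by (auto simp: divide_less_eq)
  have x0': "x0 * (3*c*b - 1) < 3*c*b - 2"
  proof -
    have "K - 1 \<noteq> 0" using K by simp
    have "K - 2 = x0 * (2 * (K - 1))" using divide_eq_eq[of "K - 2" "2 * (K - 1)" x0] x0K K by auto
    then have "x0 * (K - 1) < K - 2" using K x0 by (simp add: algebra_simps)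
    then show ?thesis by (simp add: K_def)
  qed
  define s0 where "s0 = c * x0"
  have s0: "0 < s0" "s0 < c" using x0 assms by (auto simp: s0_def)
  have "G b (c + s) + G b (c - s) < 2 * G b c" if s: "0 < s" "s \<le> s0" for s
  proof -
    have "G b (c + s) + G b (c - s) < G b (c + 0) + G b (c - 0)"
    proof (rule DERIV_neg_imp_decreasing_open[where f="\<lambda>u. G b (c + u) + G b (c - u)", OF s(1)])
      fix u assume u: "0 < u" "u < s"
      define x where "x = u / c"
      have x: "0 < x" "x < x0" using u s assms by (auto simp: x_def s0_def field_simps)
      have "(ln (1 + x) - ln (1 - x)) / b \<le> (x + x / (1 - x)) / b"
        using ln_ratio_upper[of x] x x0 assms by (simp add: divide_right_mono)
      moreover have "(x + x / (1 - x)) / b < 3 * u"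
      proof -
        have "x * (3*c*b - 1) < x0 * (3*c*b - 1)"
          using x K by (intro mult_strict_right_mono) (auto simp: K_def)
        then have "x * (3*c*b - 1) < 3*c*b - 2" using x0' by linarith
        then have "2 - x < 3*c*b * (1 - x)" by (simp add: algebra_simps)
        then have "x * (2 - x) < x * (3*c*b * (1 - x))" using x by simp
        then have "(x + x / (1 - x)) < 3 * c * b * x" using x x0 by (simp add: field_simps)
        then have "(x + x / (1 - x)) / b < 3 * c * x" using assms by (simp add: field_simps)
        then show ?thesis using assms by (simp add: x_def)
      qed
      ultimately have "- 3 * u + (ln (1 + u/c) - ln (1 - u/c)) / b < 0" unfolding x_def by linarith
      then show "\<exists>y. ((\<lambda>u. G b (c + u) + G b (c - u)) has_real_derivative y) (at u) \<and> y < 0"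
        using k_deriv[of c u b] u s s0 assms by auto
    qed (rule k_cont, use s s0 assms in auto)
    then show ?thesis by simp
  qed
  then show ?thesis using s0 by blast
qed


definition ax :: "nat \<Rightarrow> real \<Rightarrow> real \<times> real" where
  "ax i a = (if i = 0 then (a, a) else if i = 1 then (1 - 2*a, a) else (a, 1 - 2*a))"

lemma mpt_ax: "mpt b i = ax i (p_beta b)" by (simp add: mpt_def ax_def Let_def)
lemma sigma_ax: "sigma b i = ax i (q_beta b)" by (simp add: sigma_def ax_def Let_def)
lemma p_ax: "i < 3 \<Longrightarrow> p_pt = ax i (1/3)"
  by (auto simp: p_pt_def ax_def numeral_3_eq_3 less_Suc_eq)

lemma coord_ax: "i < 3 \<Longrightarrow> k < 3 \<Longrightarrow> coord (ax i a) k = (if k = i then 1 - 2*a else a)"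
  by (auto simp: ax_def coord_def numeral_3_eq_3 less_Suc_eq)

lemma sum3: "i < 3 \<Longrightarrow> j < 3 \<Longrightarrow> k < 3 \<Longrightarrow> i \<noteq> j \<Longrightarrow> i \<noteq> k \<Longrightarrow> j \<noteq> k \<Longrightarrow>
  g (coord x 0) + g (coord x 1) + g (coord x 2) = (g (coord x i) + g (coord x j) + g (coord x k) :: real)"
  by (auto simp: numeral_3_eq_3 less_Suc_eq numeral_2_eq_2 add_ac)

lemma F_ax: "i < 3 \<Longrightarrow> F b (ax i a) = phi b a + 1/4"
  by (auto simp: F_G phi_def coord_ax numeral_3_eq_3 less_Suc_eq)

lemma H_eq: "H b = phi b (q_beta b) + 1/4"
  by (simp add: H_def sigma_ax F_ax)

lemma F_sigma: "i < 3 \<Longrightarrow> F b (sigma b i) = H b"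
  by (simp add: sigma_ax F_ax H_eq)

lemma F_mpt: "i < 3 \<Longrightarrow> F b (mpt b i) = phi b (p_beta b) + 1/4"
  by (simp add: mpt_ax F_ax)

lemma F_p: "F b p_pt = phi b (1/3) + 1/4"
  using F_ax[of 0 b "1/3"] p_ax[of 0] by simp

lemma ax_Xi: "i < 3 \<Longrightarrow> 0 \<le> a \<Longrightarrow> a \<le> 1/2 \<Longrightarrow> ax i a \<in> Xi"
  by (auto simp: ax_def Xi_def numeral_3_eq_3 less_Suc_eq)

lemma dist_ax: "dist (ax i a) (ax i a') \<le> 3 * \<bar>a - a'\<bar>"
proof -
  have h: "dist (u, v) (u', v') \<le> \<bar>u - u'\<bar> + \<bar>v - v'\<bar>" for u v u' v' :: real
  proof -
    have "dist (u, v) (u', v') = sqrt ((u - u')^2 + (v - v')^2)"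
      by (simp add: dist_Pair_Pair dist_real_def)
    also have "\<dots> \<le> \<bar>u - u'\<bar> + \<bar>v - v'\<bar>"
      by (rule real_le_lsqrt) (auto simp: power2_eq_square abs_mult_self_eq algebra_simps)
    finally show ?thesis .
  qed
  have e: "\<bar>(1 - 2*a) - (1 - 2*a')\<bar> = 2 * \<bar>a - a'\<bar>" by (simp add: abs_if)
  have "dist (a, a) (a', a') \<le> 3 * \<bar>a - a'\<bar>" using h[of a a a' a'] by (smt (verit))
  moreover have "dist (1 - 2*a, a) (1 - 2*a', a') \<le> 3 * \<bar>a - a'\<bar>" using h[of "1 - 2*a" a "1 - 2*a'" a'] e by (smt (verit))
  moreover have "dist (a, 1 - 2*a) (a', 1 - 2*a') \<le> 3 * \<bar>a - a'\<bar>" using h[of a "1 - 2*a" a' "1 - 2*a'"] e by (smt (verit))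
  ultimately show ?thesis by (simp add: ax_def)
qed

lemma ax_cont: "continuous_on S (ax i)"
  unfolding ax_def by (cases "i = 0"; cases "i = 1") (auto intro!: continuous_intros)

lemma connected_ax: "connected (ax i ` {a1..a2})"
  by (rule connected_continuous_image[OF ax_cont]) simp

lemma connected_ax': "connected (ax i ` {a1<..a2})"
  by (rule connected_continuous_image[OF ax_cont]) simp

lemma connected_ax'': "connected (ax i ` {a1..<a2})"
  by (rule connected_continuous_image[OF ax_cont]) simp

lemma closure_ax_left: assumes "a1 < a2" "\<And>a. a1 \<le> a \<Longrightarrow> a < a2 \<Longrightarrow> ax i a \<in> S"
  shows "ax i a2 \<in> closure S"
  unfolding closure_approachable
proof (intro allI impI)
  fix e :: real assume e: "0 < e"
  define a where "a = max a1 (a2 - e/6)"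
  have a: "a1 \<le> a" "a < a2" "\<bar>a - a2\<bar> < e/3" using assms e by (auto simp: a_def max_def)
  have "3 * \<bar>a - a2\<bar> < e" using a(3) by simp
  then have "dist (ax i a) (ax i a2) < e" using dist_ax[of i a a2] by (rule le_less_trans[rotated])
  then show "\<exists>y\<in>S. dist y (ax i a2) < e" using assms(2)[OF a(1,2)] by blast
qed

lemma closure_ax_right: assumes "a1 < a2" "\<And>a. a1 < a \<Longrightarrow> a \<le> a2 \<Longrightarrow> ax i a \<in> S"
  shows "ax i a1 \<in> closure S"
  unfolding closure_approachable
proof (intro allI impI)
  fix e :: real assume e: "0 < e"
  define a where "a = min a2 (a1 + e/6)"
  have a: "a1 < a" "a \<le> a2" "\<bar>a - a1\<bar> < e/3" using assms e by (auto simp: a_def min_def)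
  have "3 * \<bar>a - a1\<bar> < e" using a(3) by simp
  then have "dist (ax i a) (ax i a1) < e" using dist_ax[of i a a1] by (rule le_less_trans[rotated])
  then show "\<exists>y\<in>S. dist y (ax i a1) < e" using assms(2)[OF a(1,2)] by blast
qed

lemma W_sub: "W b \<subseteq> Xi" by (auto simp: W_def)

lemma comp_local: assumes "y \<in> W b"
  shows "\<exists>r>0. ball y r \<inter> Xi \<subseteq> W b"
proof -
  have y: "y \<in> Xi" "F b y < H b" using assms by (auto simp: W_def)
  have "continuous (at y within Xi) (F b)" using F_cont y(1) continuous_on_eq_continuous_within by blast
  then obtain r where r: "r > 0" "\<And>x. x \<in> Xi \<Longrightarrow> dist x y < r \<Longrightarrow> dist (F b x) (F b y) < H b - F b y"
    using y unfolding continuous_within_eps_delta by (metis diff_gt_0_iff_gt)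
  have "ball y r \<inter> Xi \<subseteq> W b"
  proof
    fix x assume x: "x \<in> ball y r \<inter> Xi"
    then have "dist (F b x) (F b y) < H b - F b y" using r by (auto simp: dist_commute)
    then have "F b x < H b" by (auto simp: dist_real_def)
    then show "x \<in> W b" using x by (auto simp: W_def)
  qed
  then show ?thesis using r by blast
qed

lemma connected_ballXi: "connected (ball y r \<inter> Xi)"
  by (intro convex_connected convex_Int convex_ball Xi_convex)

lemma comp_closure: assumes "y \<in> W b" "y \<in> closure (connected_component_set (W b) z)"
  shows "y \<in> connected_component_set (W b) z"
    "\<exists>r>0. ball y r \<inter> Xi \<subseteq> connected_component_set (W b) z"
proof -
  obtain r where r: "r > 0" "ball y r \<inter> Xi \<subseteq> W b" using comp_local[OF assms(1)] by blast
  obtain w where w: "w \<in> connected_component_set (W b) z" "dist y w < r"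
    using closure_approachableD[OF assms(2) r(1)] by blast
  have wX: "w \<in> Xi" using w(1) connected_component_subset W_sub by blast
  have "ball y r \<inter> Xi \<subseteq> connected_component_set (W b) w"
    by (rule connected_component_maximal) (use w wX r connected_ballXi in auto)
  also have "\<dots> = connected_component_set (W b) z" by (rule connected_component_eq[OF w(1)])
  finally have sub: "ball y r \<inter> Xi \<subseteq> connected_component_set (W b) z" .
  have "y \<in> ball y r \<inter> Xi" using r assms(1) W_sub by auto
  then show "y \<in> connected_component_set (W b) z" using sub by blast
  show "\<exists>r>0. ball y r \<inter> Xi \<subseteq> connected_component_set (W b) z" using sub r by blast
qed

lemma comp_region: assumes "connected C" "C \<subseteq> A \<union> B" "open A" "open B" "A \<inter> B = {}" "z \<in> C" "z \<in> A"
  shows "C \<subseteq> A"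
  using connectedD[OF assms(1,3,4)] assms by auto

lemma closure_W: "closure (W b) \<subseteq> {x \<in> Xi. F b x \<le> H b}"
proof -
  have "closed {x \<in> Xi. F b x \<le> H b}"
    by (rule continuous_on_closed_Collect_le[OF F_cont continuous_on_const Xi_closed])
  then show ?thesis by (intro closure_minimal) (auto simp: W_def)
qed

lemma closure_Wc: "closure (Wc b i) \<subseteq> {x \<in> Xi. F b x \<le> H b}"
proof -
  have "Wc b i \<subseteq> W b" by (auto simp: Wc_def connected_component_subset)
  then show ?thesis using closure_W closure_mono by blast
qed

lemma ax_in_comp: assumes "ax i a0 \<in> W b" "connected S" "S \<subseteq> W b" "ax i a0 \<in> S" "x \<in> S"
  shows "x \<in> connected_component_set (W b) (ax i a0)"
  using connected_component_maximal[OF assms(4,2,3)] assms(5) by blast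


lemma coord_eq: "coord x 1 = coord y 1 \<Longrightarrow> coord x 2 = coord y 2 \<Longrightarrow> x = y"
  by (cases x; cases y) (auto simp: coord_def)

lemma eq_ax: assumes "k < 3" "coord x k = 1 - 2*a" "\<And>l. l < 3 \<Longrightarrow> l \<noteq> k \<Longrightarrow> coord x l = a"
  shows "x = ax k a"
proof (rule coord_eq)
  show "coord x 1 = coord (ax k a) 1" using assms coord_ax[of k 1 a] by (cases "k = 1") auto
  show "coord x 2 = coord (ax k a) 2" using assms coord_ax[of k 2 a] by (cases "k = 2") auto
qed

lemma coord_sum3: "i < 3 \<Longrightarrow> j < 3 \<Longrightarrow> k < 3 \<Longrightarrow> i \<noteq> j \<Longrightarrow> i \<noteq> k \<Longrightarrow> j \<noteq> k \<Longrightarrow>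
  coord x i + coord x j + coord x k = 1"
  using sum3[of i j k "\<lambda>t. t" x] coord_sum[of x] by simp

lemma F_G3: "i < 3 \<Longrightarrow> j < 3 \<Longrightarrow> k < 3 \<Longrightarrow> i \<noteq> j \<Longrightarrow> i \<noteq> k \<Longrightarrow> j \<noteq> k \<Longrightarrow>
  F b x = G b (coord x i) + G b (coord x j) + G b (coord x k) + 1/4"
  using sum3[of i j k "G b" x] by (simp add: F_G)

lemma third_idx: "(i::nat) < 3 \<Longrightarrow> j < 3 \<Longrightarrow> k < 3 \<Longrightarrow> i \<noteq> j \<Longrightarrow> i \<noteq> k \<Longrightarrow> j \<noteq> k \<Longrightarrow>
   l < 3 \<Longrightarrow> l \<noteq> k \<Longrightarrow> l = i \<or> l = j"
  by (auto simp: numeral_3_eq_3 less_Suc_eq)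

lemma tie_ax: assumes "i < 3" "j < 3" "k < 3" "i \<noteq> j" "i \<noteq> k" "j \<noteq> k" "coord x i = a" "coord x j = a"
  shows "x = ax k a" "coord x k = 1 - 2*a" "F b x = phi b a + 1/4"
proof -
  show ck: "coord x k = 1 - 2*a" using coord_sum3[OF assms(1-6), of x] assms by simp
  show "x = ax k a"
    by (rule eq_ax[OF assms(3) ck]) (use third_idx[OF assms(1-6)] assms in blast)
  then show "F b x = phi b a + 1/4" using F_ax assms by simp
qed

lemma Ybar: assumes "2 \<le> b" "beta3 < b" "x \<in> Xi" "i < 3" "j < 3" "k < 3" "i \<noteq> j" "i \<noteq> k" "j \<noteq> k"
  "coord x i = coord x j" "coord x k \<le> coord x i"
  shows "H b \<le> F b x" "F b x = H b \<Longrightarrow> x = sigma b k"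
proof -
  define a where "a = coord x i"
  have ta: "coord x i = a" "coord x j = a" using assms(10) by (auto simp: a_def)
  have ck: "coord x k = 1 - 2*a" by (rule tie_ax(2)[OF assms(4-9) ta])
  have xe: "x = ax k a" by (rule tie_ax(1)[OF assms(4-9) ta])
  have Fx: "F b x = phi b a + 1/4" by (rule tie_ax(3)[OF assms(4-9) ta])
  have a3: "1/3 \<le> a" using ck assms(11) by (simp add: a_def)
  have a2: "a \<le> 1/2" using ck coord_Xi[OF assms(3,6)] by simp
  note q = q_props[OF assms(2)] and qg = q_ge_third[OF assms(1,2)]
  have "phi b (q_beta b) \<le> phi b a \<and> (phi b a = phi b (q_beta b) \<longrightarrow> a = q_beta b)"
  proof (cases a "q_beta b" rule: linorder_cases)
    case less
    then have "phi b (q_beta b) < phi b a" using phi_P3[OF assms(2) a3 less] by simp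
    then show ?thesis by simp
  next
    case equal then show ?thesis by simp
  next
    case greater
    then have "phi b (q_beta b) < phi b a" using phi_P4[OF assms(2) order.refl qg greater a2] by simp
    then show ?thesis by simp
  qed
  then show "H b \<le> F b x" "F b x = H b \<Longrightarrow> x = sigma b k"
    using Fx xe by (auto simp: H_eq sigma_ax)
qed

definition R :: "nat \<Rightarrow> (real \<times> real) set" where
  "R i = {x. \<forall>j<3. j \<noteq> i \<longrightarrow> coord x j < coord x i}"

lemma R_open: "open (R i)"
proof -
  have "R i = (\<Inter>j\<in>{..<3} - {i}. {x. coord x j < coord x i})" by (auto simp: R_def)
  moreover have "open {x. coord x j < coord x i}" for j
    by (rule open_Collect_less) (rule cont_coord)+
  ultimately show ?thesis by (auto intro!: open_INT)
qed

lemma R_disj: assumes "i < 3" "j < 3" "i \<noteq> j" shows "R i \<inter> R j = {}"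
proof -
  have False if "x \<in> R i" "x \<in> R j" for x
  proof -
    have "coord x j < coord x i" using that(1) assms by (auto simp: R_def)
    moreover have "coord x i < coord x j" using that(2) assms by (auto simp: R_def)
    ultimately show False by simp
  qed
  then show ?thesis by blast
qed

lemma closure_R: "closure (R i) \<subseteq> {x. \<forall>j<3. coord x j \<le> coord x i}"
proof -
  have "{x. \<forall>j<3. coord x j \<le> coord x i} = (\<Inter>j\<in>{..<3}. {x. coord x j \<le> coord x i})" by auto
  moreover have "closed {x. coord x j \<le> coord x i}" for j
    by (rule closed_Collect_le) (rule cont_coord)+
  ultimately have "closed {x. \<forall>j<3. coord x j \<le> coord x i}" by (auto intro!: closed_INT)
  moreover have "R i \<subseteq> {x. \<forall>j<3. coord x j \<le> coord x i}" by (auto simp: R_def less_imp_le)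
  ultimately show ?thesis by (intro closure_minimal)
qed

lemma notR_tie: assumes "x \<notin> R 0" "x \<notin> R 1" "x \<notin> R 2"
  shows "\<exists>i j k. i < 3 \<and> j < 3 \<and> k < 3 \<and> i \<noteq> j \<and> i \<noteq> k \<and> j \<noteq> k \<and> coord x i = coord x j \<and> coord x k \<le> coord x i"
proof -
  have h0: "\<not> (coord x 1 < coord x 0 \<and> coord x 2 < coord x 0)"
    using assms(1) by (auto simp: R_def numeral_3_eq_3 less_Suc_eq numeral_2_eq_2)
  have h1: "\<not> (coord x 0 < coord x 1 \<and> coord x 2 < coord x 1)"
    using assms(2) by (auto simp: R_def numeral_3_eq_3 less_Suc_eq numeral_2_eq_2)
  have h2: "\<not> (coord x 0 < coord x 2 \<and> coord x 1 < coord x 2)"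
    using assms(3) by (auto simp: R_def numeral_3_eq_3 less_Suc_eq numeral_2_eq_2)
  consider "coord x 0 = coord x 1 \<and> coord x 2 \<le> coord x 0" | "coord x 0 = coord x 2 \<and> coord x 1 \<le> coord x 0"
    | "coord x 1 = coord x 2 \<and> coord x 0 \<le> coord x 1"
    using h0 h1 h2 by linarith
  then show ?thesis
  proof cases
    case 1 then show ?thesis by (intro exI[of _ 0] exI[of _ 1] exI[of _ 2]) auto
  next
    case 2 then show ?thesis by (intro exI[of _ 0] exI[of _ 2] exI[of _ 1]) auto
  next
    case 3 then show ?thesis by (intro exI[of _ 1] exI[of _ 2] exI[of _ 0]) auto
  qed
qed

lemma W_in_R: assumes "2 \<le> b" "beta3 < b" shows "W b \<subseteq> R 0 \<union> R 1 \<union> R 2"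
proof
  fix x assume x: "x \<in> W b"
  show "x \<in> R 0 \<union> R 1 \<union> R 2"
  proof (rule ccontr)
    assume "x \<notin> R 0 \<union> R 1 \<union> R 2"
    then obtain i j k where ijk: "i < 3" "j < 3" "k < 3" "i \<noteq> j" "i \<noteq> k" "j \<noteq> k"
      "coord x i = coord x j" "coord x k \<le> coord x i" using notR_tie by blast
    have "H b \<le> F b x" using Ybar[OF assms _ ijk] x by (auto simp: W_def)
    then show False using x by (auto simp: W_def)
  qed
qed

lemma mpt_R: assumes "beta3 < b" "i < 3" shows "mpt b i \<in> R i"
  using p_props[OF assms(1)] m0_bounds assms(2)
  by (auto simp: R_def mpt_ax coord_ax)

lemma others_open: "open (\<Union>j\<in>{..<3} - {i}. R j)"
  by (auto intro!: R_open)

lemma Wc_in_R: assumes "2 \<le> b" "beta3 < b" "i < 3" "z \<in> R i"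
  shows "connected_component_set (W b) z \<subseteq> R i"
proof (cases "z \<in> W b")
  case False
  then have "connected_component_set (W b) z = {}" by (rule connected_component_eq_empty[THEN iffD2])
  then show ?thesis by (metis empty_subsetI)
next
  case True
  have sub: "connected_component_set (W b) z \<subseteq> R i \<union> (\<Union>j\<in>{..<3} - {i}. R j)"
    using connected_component_subset[of "W b" z] W_in_R[OF assms(1,2)] assms(3)
    by (auto simp: numeral_3_eq_3 less_Suc_eq numeral_2_eq_2) 
  have disj: "R i \<inter> (\<Union>j\<in>{..<3} - {i}. R j) = {}" using R_disj assms(3) by auto
  have zc: "z \<in> connected_component_set (W b) z" using True by simp
  show ?thesis
    using comp_region[OF connected_connected_component sub R_open others_open disj zc assms(4)] .
qed

lemma Wc_mpt: "i < 3 \<Longrightarrow> Wc b i = connected_component_set (W b) (mpt b i)"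
  by (simp add: Wc_def)

theorem part1_cond: assumes "2 \<le> b" "beta3 < b" "\<And>i. i < 3 \<Longrightarrow> mpt b i \<in> W b"
  shows "\<forall>i<3. \<forall>j<3. i \<noteq> j \<longrightarrow> Wc b i \<noteq> Wc b j"
proof (intro allI impI)
  fix i j :: nat assume ij: "i < 3" "j < 3" "i \<noteq> j"
  have "mpt b i \<in> Wc b i" using assms(3)[OF ij(1)] ij by (simp add: Wc_mpt)
  moreover have "Wc b j \<subseteq> R j" using Wc_in_R[OF assms(1,2) ij(2) mpt_R[OF assms(2) ij(2)]] ij by (simp add: Wc_mpt)
  moreover have "mpt b i \<in> R i" using mpt_R[OF assms(2) ij(1)] .
  ultimately show "Wc b i \<noteq> Wc b j" using R_disj[OF ij] by auto
qed

lemma Sfrak_sub: assumes "2 \<le> b" "beta3 < b" "i < 3" "j < 3" "k < 3" "i \<noteq> j" "i \<noteq> k" "j \<noteq> k"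
  shows "Sfrak b i j \<subseteq> {sigma b k}"
proof
  fix x assume x: "x \<in> Sfrak b i j"
  have ci: "closure (Wc b i) \<subseteq> {x. \<forall>l<3. coord x l \<le> coord x i}"
    using closure_mono[OF Wc_in_R[OF assms(1,2,3) mpt_R[OF assms(2,3)]]] closure_R assms(3)
    by (auto simp: Wc_mpt)
  have cj: "closure (Wc b j) \<subseteq> {x. \<forall>l<3. coord x l \<le> coord x j}"
    using closure_mono[OF Wc_in_R[OF assms(1,2,4) mpt_R[OF assms(2,4)]]] closure_R assms(4)
    by (auto simp: Wc_mpt)
  have xi: "\<forall>l<3. coord x l \<le> coord x i" and xj: "\<forall>l<3. coord x l \<le> coord x j"
    and xF: "x \<in> Xi" "F b x \<le> H b"
    using x ci cj closure_Wc[of b i] by (auto simp: Sfrak_def)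
  have tie: "coord x i = coord x j" "coord x k \<le> coord x i" using xi xj assms by force+
  have "H b \<le> F b x" by (rule Ybar(1)[OF assms(1,2) xF(1) assms(3-8) tie])
  then have "F b x = H b" using xF by simp
  then show "x \<in> {sigma b k}" using Ybar(2)[OF assms(1,2) xF(1) assms(3-8) tie] by simp
qed

lemma sigma_two: "i < 3 \<Longrightarrow> sigma 2 i = p_pt"
  by (simp add: sigma_ax q_two p_ax)

lemma axis_W_two: assumes "beta3 < 2" "i < 3" "p_beta 2 \<le> a" "a < 1/3"
  shows "ax i a \<in> W 2"
proof -
  note p = p_props[OF assms(1)]
  have "phi 2 a < phi 2 (1/3)" using phi_P1[OF assms(1) assms(3,4)] q_two by simp
  moreover have "ax i a \<in> Xi" using assms p by (intro ax_Xi) auto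
  ultimately show ?thesis by (simp add: W_def F_ax[OF assms(2)] H_eq q_two)
qed

lemma mpt_W_two: "beta3 < 2 \<Longrightarrow> i < 3 \<Longrightarrow> mpt 2 i \<in> W 2"
  using axis_W_two[of i "p_beta 2"] p_props[of 2] m0_bounds by (simp add: mpt_ax)

lemma p_closure_two: assumes "beta3 < 2" "i < 3" shows "p_pt \<in> closure (Wc 2 i)"
proof -
  note p = p_props[OF assms(1)]
  have pl: "p_beta 2 < 1/3" using p m0_bounds by simp
  have "ax i a \<in> Wc 2 i" if a: "p_beta 2 \<le> a" "a < 1/3" for a
  proof -
    have sub: "ax i ` {p_beta 2..<1/3} \<subseteq> W 2" using axis_W_two[OF assms(1,2)] by auto
    have "ax i a \<in> connected_component_set (W 2) (ax i (p_beta 2))"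
      by (rule ax_in_comp[OF _ connected_ax'' sub]) (use a pl axis_W_two[OF assms(1,2)] in auto)
    then show ?thesis using assms by (simp add: Wc_mpt mpt_ax)
  qed
  then have "ax i (1/3) \<in> closure (Wc 2 i)" by (intro closure_ax_left[OF pl]) auto
  then show ?thesis using p_ax[OF assms(2)] by simp
qed

theorem part3: assumes "beta3 < 2" shows "\<forall>i<3. \<forall>j<3. i \<noteq> j \<longrightarrow> Sfrak 2 i j = {p_pt}"
proof (intro allI impI)
  fix i j :: nat assume ij: "i < 3" "j < 3" "i \<noteq> j"
  obtain k where k: "k < 3" "i \<noteq> k" "j \<noteq> k"
    using ij by (auto simp: numeral_3_eq_3 less_Suc_eq)
  have "Sfrak 2 i j \<subseteq> {p_pt}" using Sfrak_sub[OF order.refl assms ij(1,2) k(1) ij(3) k(2,3)] sigma_two[OF k(1)] by simp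
  moreover have "p_pt \<in> Sfrak 2 i j" using p_closure_two[OF assms ij(1)] p_closure_two[OF assms ij(2)] by (simp add: Sfrak_def)
  ultimately show "Sfrak 2 i j = {p_pt}" by blast
qed


context
  fixes b :: real
  assumes bl: "beta3 < b" "b < 2"
begin

abbreviation "qq \<equiv> q_beta b"
abbreviation "cc \<equiv> 1 - 2 * q_beta b"

lemma qb: "m0 < qq" "qq < 1/3" "0 < qq" "qq * b < 2/3" "f0 qq = b" "0 < b"
proof -
  show "m0 < qq" "f0 qq = b" using q_props[OF bl(1)] by auto
  show q3: "qq < 1/3" using q_lt_third[OF bl(2,1)] .
  show q0: "0 < qq" using q_props[OF bl(1)] m0_bounds by simp
  show "qq * b < 2/3" using tf0_lt[OF q0 q3] q_props(3)[OF bl(1)] by (simp add: mult.commute)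
  show "0 < b" using bl beta3_pos by simp
qed

lemma B1: assumes "x \<in> Xi" "i < 3" "j < 3" "k < 3" "i \<noteq> j" "i \<noteq> k" "j \<noteq> k"
  "coord x i = a" "coord x j = a" "cc \<le> a"
  shows "H b < F b x"
proof -
  have ck: "coord x k = 1 - 2*a" by (rule tie_ax(2)[OF assms(2-9)])
  have Fx: "F b x = phi b a + 1/4" by (rule tie_ax(3)[OF assms(2-9)])
  have a2: "a \<le> 1/2" using ck coord_Xi[OF assms(1,4)] by simp
  have q4: "1/4 \<le> qq" using assms(10) a2 by simp
  define s where "s = 1 - 3 * qq"
  have s: "0 < s" "s \<le> qq" using qb q4 by (auto simp: s_def)
  have tu: "2 * G b qq < G b (qq + s) + G b (qq - s)"
    by (rule transverse_up) (use qb s in auto)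
  have e1: "G b (qq + s) = G b cc" by (rule arg_cong[where f="G b"]) (simp add: s_def)
  have e2: "G b (qq - s) = G b (4 * qq - 1)" by (rule arg_cong[where f="G b"]) (simp add: s_def)
  have e3: "G b (1 - 2 * cc) = G b (4 * qq - 1)" by (rule arg_cong[where f="G b"]) simp
  have "phi b qq = 2 * G b qq + G b cc" by (simp add: phi_def)
  moreover have "phi b cc = 2 * G b cc + G b (4 * qq - 1)" unfolding phi_def e3 ..
  ultimately have "phi b qq < phi b cc" using tu e1 e2 by linarith
  moreover have "phi b cc \<le> phi b a"
  proof (cases "cc = a")
    case False
    then have "cc < a" using assms(10) by simp
    then show ?thesis using phi_P4[OF bl(1) _ _ \<open>cc < a\<close> a2] qb by auto
  qed simp
  ultimately show ?thesis using Fx H_eq by simp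
qed

lemma B2: assumes "x \<in> Xi" "i < 3" "coord x i = cc" "\<And>j. j < 3 \<Longrightarrow> coord x j \<le> cc"
  shows "H b \<le> F b x" "F b x = H b \<Longrightarrow> x = sigma b i"
proof -
  obtain j k where jk: "j < 3" "k < 3" "i \<noteq> j" "i \<noteq> k" "j \<noteq> k"
    using assms(2) by (auto simp: numeral_3_eq_3 less_Suc_eq)
  have sum: "coord x j + coord x k = 2 * qq" using coord_sum3[OF assms(2) jk(1,2,3,4,5), of x] assms(3) by simp
  have Fx: "F b x = G b cc + G b (coord x j) + G b (coord x k) + 1/4"
    using F_G3[OF assms(2) jk(1,2,3,4,5), of b x] assms(3) by simp
  have nn: "0 \<le> coord x j" "0 \<le> coord x k" using coord_Xi assms(1) jk by auto
  define s where "s = \<bar>coord x j - qq\<bar>"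
  have s: "s \<le> qq" using nn sum by (auto simp: s_def)
  have GG: "G b (coord x j) + G b (coord x k) = G b (qq + s) + G b (qq - s)"
  proof (cases "coord x j \<le> qq")
    case True
    then have "coord x j = qq - s" "coord x k = qq + s" using sum by (auto simp: s_def)
    then show ?thesis by simp
  next
    case False
    then have "coord x j = qq + s" "coord x k = qq - s" using sum by (auto simp: s_def)
    then show ?thesis by simp
  qed
  have H: "H b = G b cc + 2 * G b qq + 1/4"
    using F_ax[of 0 b qq] by (simp add: H_eq phi_def)
  show "H b \<le> F b x" "F b x = H b \<Longrightarrow> x = sigma b i"
  proof -
    have "(s = 0 \<and> x = sigma b i) \<or> (0 < s \<and> H b < F b x)"
    proof (cases "s = 0")
      case True
      then have cj: "coord x j = qq" "coord x k = qq" using sum by (auto simp: s_def)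
      have "x = ax i qq"
      proof (rule eq_ax[OF assms(2)])
        show "coord x i = 1 - 2 * qq" using assms(3) .
        fix l assume "l < 3" "l \<noteq> i"
        then have "l = j \<or> l = k" using jk assms(2) by (auto simp: numeral_3_eq_3 less_Suc_eq)
        then show "coord x l = qq" using cj by auto
      qed
      then show ?thesis using True by (simp add: sigma_ax)
    next
      case False
      then have "0 < s" by (simp add: s_def)
      have "2 * G b qq < G b (qq + s) + G b (qq - s)"
        by (rule transverse_up) (use qb s \<open>0 < s\<close> in auto)
      then show ?thesis using Fx GG H \<open>0 < s\<close> by simp
    qed
    then show "H b \<le> F b x" "F b x = H b \<Longrightarrow> x = sigma b i" using F_sigma[OF assms(2), of b] by auto
  qed
qed

definition T :: "(real \<times> real) set" where "T = {x. \<forall>j<3. coord x j < cc}"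
definition U :: "nat \<Rightarrow> (real \<times> real) set" where "U i = R i \<inter> {x. cc < coord x i}"

lemma T_open: "open T"
proof -
  have "T = (\<Inter>j\<in>{..<3}. {x. coord x j < cc})" by (auto simp: T_def)
  moreover have "open {x. coord x j < cc}" for j
    by (rule open_Collect_less) (auto intro: cont_coord continuous_intros)
  ultimately show ?thesis by (auto intro!: open_INT)
qed

lemma U_open: "open (U i)"
  unfolding U_def by (intro open_Int R_open open_Collect_less) (auto intro: cont_coord continuous_intros)

lemma closure_T: "closure T \<subseteq> {x. \<forall>j<3. coord x j \<le> cc}"
proof -
  have "{x. \<forall>j<3. coord x j \<le> cc} = (\<Inter>j\<in>{..<3}. {x. coord x j \<le> cc})" by auto
  moreover have "closed {x. coord x j \<le> cc}" for j
    by (rule closed_Collect_le) (auto intro: cont_coord continuous_intros)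
  ultimately have "closed {x. \<forall>j<3. coord x j \<le> cc}" by (auto intro!: closed_INT)
  moreover have "T \<subseteq> {x. \<forall>j<3. coord x j \<le> cc}" by (auto simp: T_def less_imp_le)
  ultimately show ?thesis by (intro closure_minimal)
qed

lemma closure_U: "closure (U i) \<subseteq> {x. cc \<le> coord x i \<and> (\<forall>j<3. coord x j \<le> coord x i)}"
proof -
  have "closed {x. cc \<le> coord x i}"
    by (rule closed_Collect_le) (auto intro: cont_coord continuous_intros)
  moreover have "U i \<subseteq> {x. cc \<le> coord x i}" by (auto simp: U_def)
  ultimately have "closure (U i) \<subseteq> {x. cc \<le> coord x i}" by (intro closure_minimal)
  moreover have "closure (U i) \<subseteq> closure (R i)" by (rule closure_mono) (auto simp: U_def)
  ultimately show ?thesis using closure_R by blast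
qed

lemma TU_disj: "i < 3 \<Longrightarrow> T \<inter> U i = {}" by (fastforce simp: T_def U_def)
lemma UU_disj: "i < 3 \<Longrightarrow> j < 3 \<Longrightarrow> i \<noteq> j \<Longrightarrow> U i \<inter> U j = {}"
  using R_disj by (auto simp: U_def)

lemma W_cover: "W b \<subseteq> T \<union> U 0 \<union> U 1 \<union> U 2"
proof
  fix x assume xW: "x \<in> W b"
  have x: "x \<in> Xi" "F b x < H b" using xW by (auto simp: W_def)
  show "x \<in> T \<union> U 0 \<union> U 1 \<union> U 2"
  proof (rule ccontr)
    assume nx: "x \<notin> T \<union> U 0 \<union> U 1 \<union> U 2"
    then obtain l where l: "l < 3" "cc \<le> coord x l" by (auto simp: T_def not_less)
    show False
    proof (cases "x \<in> R 0 \<union> R 1 \<union> R 2")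
      case False
      then obtain i j k where ijk: "i < 3" "j < 3" "k < 3" "i \<noteq> j" "i \<noteq> k" "j \<noteq> k"
        "coord x i = coord x j" "coord x k \<le> coord x i" using notR_tie by blast
      have "coord x l \<le> coord x i"
        using ijk l third_idx[OF ijk(1-6) l(1)] by (cases "l = k") auto
      then have "H b < F b x" using B1[OF x(1) ijk(1-6) refl ijk(7)[symmetric]] l by simp
      then show False using x by simp
    next
      case True
      then have "(0::nat) < 3 \<and> x \<in> R 0 \<or> (1::nat) < 3 \<and> x \<in> R 1 \<or> (2::nat) < 3 \<and> x \<in> R 2" by auto
      then have "\<exists>i<3. x \<in> R i" by blast
      then obtain i where i: "i < 3" "x \<in> R i" by blast
      have mx: "\<And>j. j < 3 \<Longrightarrow> coord x j \<le> coord x i" using i by (auto simp: R_def less_imp_le)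
      have "i = 0 \<or> i = 1 \<or> i = 2" using i(1) by auto
      then have "x \<notin> U i" using nx by (elim disjE) auto
      then have "coord x i \<le> cc" using i(2) by (auto simp: U_def)
      moreover have "cc \<le> coord x i" using mx[OF l(1)] l by simp
      ultimately have "coord x i = cc" by simp
      then have "H b \<le> F b x" using B2(1)[OF x(1) i(1)] mx by (metis)
      then show False using x by simp
    qed
  qed
qed

lemma p_W: "p_pt \<in> W b"
proof -
  have "phi b (1/3) < phi b qq" using phi_P2[OF bl(1) order.refl qb(2) order.refl] .
  then show ?thesis using ax_Xi[of 0 "1/3"] p_ax[of 0] by (simp add: W_def F_p H_eq)
qed

lemma p_T: "p_pt \<in> T"
  using qb by (auto simp: T_def p_ax[of 0] coord_ax)

lemma axis_W_low: assumes "i < 3" "p_beta b \<le> a" "a < qq" shows "ax i a \<in> W b"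
proof -
  have "phi b a < phi b qq" using phi_P1[OF bl(1) assms(2,3) order.refl] qb by simp
  moreover have "ax i a \<in> Xi" using assms p_props[OF bl(1)] qb by (intro ax_Xi) auto
  ultimately show ?thesis by (simp add: W_def F_ax[OF assms(1)] H_eq)
qed

lemma axis_W_high: assumes "i < 3" "qq < a" "a \<le> 1/3" shows "ax i a \<in> W b"
proof -
  have "phi b a < phi b qq"
  proof (cases "a = 1/3")
    case True then show ?thesis using phi_P2[OF bl(1) order.refl qb(2) order.refl] unfolding True by simp
  next
    case False then show ?thesis using phi_P2[OF bl(1) order.refl assms(2)] assms by simp
  qed
  moreover have "ax i a \<in> Xi" using assms qb by (intro ax_Xi) auto
  ultimately show ?thesis by (simp add: W_def F_ax[OF assms(1)] H_eq)
qed

lemma pq: "p_beta b < qq" using p_props[OF bl(1)] qb by simp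

lemma mpt_W: "i < 3 \<Longrightarrow> mpt b i \<in> W b"
  using axis_W_low[of i "p_beta b"] pq by (simp add: mpt_ax)

lemma mpt_U: "i < 3 \<Longrightarrow> mpt b i \<in> U i"
  using mpt_R[OF bl(1)] pq p_props[OF bl(1)] by (auto simp: U_def mpt_ax coord_ax)

lemma comp_in: assumes "z \<in> A" "A \<subseteq> X" "open A" "open B" "A \<inter> B = {}" "W b \<subseteq> A \<union> B"
  shows "connected_component_set (W b) z \<subseteq> A"
proof (cases "z \<in> W b")
  case False
  then have "connected_component_set (W b) z = {}" by (rule connected_component_eq_empty[THEN iffD2])
  then show ?thesis by (metis empty_subsetI)
next
  case True
  have zc: "z \<in> connected_component_set (W b) z" using True by simp
  have sub: "connected_component_set (W b) z \<subseteq> A \<union> B"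
    using connected_component_subset[of "W b" z] assms(6) by blast
  show ?thesis using comp_region[OF connected_connected_component sub assms(3,4,5) zc assms(1)] .
qed

lemma Wc_U: assumes "i < 3" shows "Wc b i \<subseteq> U i"
proof -
  define B where "B = T \<union> (\<Union>j\<in>{..<3} - {i}. U j)"
  have "open B" unfolding B_def by (auto intro!: T_open U_open)
  moreover have "U i \<inter> B = {}" unfolding B_def using TU_disj UU_disj assms by blast
  moreover have "W b \<subseteq> U i \<union> B" using W_cover assms unfolding B_def
    by (auto simp: numeral_3_eq_3 less_Suc_eq numeral_2_eq_2)
  ultimately show ?thesis using comp_in[OF mpt_U[OF assms] subset_refl U_open] assms by (simp add: Wc_mpt)
qed

lemma Wc_T: "Wc b 3 \<subseteq> T"
proof -
  define B where "B = U 0 \<union> U 1 \<union> U 2"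
  have "open B" unfolding B_def by (auto intro!: U_open)
  moreover have "T \<inter> B = {}" unfolding B_def using TU_disj[of 0] TU_disj[of 1] TU_disj[of 2] by auto
  moreover have "W b \<subseteq> T \<union> B" using W_cover unfolding B_def by blast
  ultimately show ?thesis using comp_in[OF p_T subset_refl T_open] by (simp add: Wc_def)
qed

theorem part4: "\<forall>i\<le>3. \<forall>j\<le>3. i \<noteq> j \<longrightarrow> Wc b i \<noteq> Wc b j"
proof -
  have nonempty: "\<And>i. i \<le> 3 \<Longrightarrow> (if i = 3 then p_pt else mpt b i) \<in> Wc b i"
    using mpt_W p_W by (auto simp: Wc_def)
  define Z where "Z i = (if i = 3 then T else U i)" for i
  have sub: "\<And>i. i \<le> 3 \<Longrightarrow> Wc b i \<subseteq> Z i" using Wc_U Wc_T by (auto simp: Z_def)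
  have disj: "Z i \<inter> Z j = {}" if "i \<le> 3" "j \<le> 3" "i \<noteq> j" for i j
  proof (cases "i = 3")
    case True
    then have "j < 3" using that by simp
    then show ?thesis using TU_disj[of j] True that by (simp add: Z_def)
  next
    case False
    then have i3: "i < 3" using that by simp
    show ?thesis
    proof (cases "j = 3")
      case True then show ?thesis using TU_disj[OF i3] False by (auto simp: Z_def)
    next
      case False then show ?thesis using UU_disj[OF i3, of j] that \<open>i \<noteq> 3\<close> by (auto simp: Z_def)
    qed
  qed
  show ?thesis
  proof (intro allI impI)
    fix i j :: nat assume ij: "i \<le> 3" "j \<le> 3" "i \<noteq> j"
    show "Wc b i \<noteq> Wc b j"
    proof
      assume e: "Wc b i = Wc b j"
      have "(if i = 3 then p_pt else mpt b i) \<in> Z i \<inter> Z j" using nonempty[OF ij(1)] sub ij e by blast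
      then show False using disj[OF ij] by blast
    qed
  qed
qed

theorem part5: "(\<forall>i<3. \<forall>j<3. i \<noteq> j \<longrightarrow> Sfrak b i j = {}) \<and> (\<forall>i<3. Sfrak b i 3 = {sigma b i})"
proof (intro conjI allI impI)
  fix i j :: nat assume ij: "i < 3" "j < 3" "i \<noteq> j"
  show "Sfrak b i j = {}"
  proof (rule ccontr)
    assume "Sfrak b i j \<noteq> {}"
    then obtain x where x: "x \<in> closure (Wc b i)" "x \<in> closure (Wc b j)" by (auto simp: Sfrak_def)
    have xi: "cc \<le> coord x i" "\<forall>l<3. coord x l \<le> coord x i"
      using x(1) closure_mono[OF Wc_U[OF ij(1)]] closure_U by blast+
    have xj: "\<forall>l<3. coord x l \<le> coord x j"
      using x(2) closure_mono[OF Wc_U[OF ij(2)]] closure_U by blast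
    have xF: "x \<in> Xi" "F b x \<le> H b" using x(1) closure_Wc by blast+
    obtain k where k: "k < 3" "i \<noteq> k" "j \<noteq> k" using ij by (auto simp: numeral_3_eq_3 less_Suc_eq)
    have "coord x i = coord x j" using xi xj ij by force
    then have "H b < F b x" using B1[OF xF(1) ij(1,2) k(1) ij(3) k(2,3) refl] xi by simp
    then show False using xF by simp
  qed
next
  fix i :: nat assume i: "i < 3"
  show "Sfrak b i 3 = {sigma b i}"
  proof
    show "Sfrak b i 3 \<subseteq> {sigma b i}"
    proof
      fix x assume "x \<in> Sfrak b i 3"
      then have x: "x \<in> closure (Wc b i)" "x \<in> closure (Wc b 3)" by (auto simp: Sfrak_def)
      have xi: "cc \<le> coord x i" using x(1) closure_mono[OF Wc_U[OF i]] closure_U by blast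
      have xT: "\<forall>l<3. coord x l \<le> cc" using x(2) closure_mono[OF Wc_T] closure_T by blast
      have xF: "x \<in> Xi" "F b x \<le> H b" using x(1) closure_Wc by blast+
      have ci: "coord x i = cc" using xi xT i by force
      have "H b \<le> F b x" using B2(1)[OF xF(1) i ci] xT by blast
      then show "x \<in> {sigma b i}" using B2(2)[OF xF(1) i ci] xT xF by force
    qed
  next
    have s1: "ax i qq \<in> closure (Wc b i)"
    proof (rule closure_ax_left[OF pq])
      fix a assume a: "p_beta b \<le> a" "a < qq"
      have sub: "ax i ` {p_beta b..<qq} \<subseteq> W b" using axis_W_low[OF i] by auto
      have "ax i a \<in> connected_component_set (W b) (ax i (p_beta b))"
        by (rule ax_in_comp[OF _ connected_ax'' sub]) (use a pq axis_W_low[OF i] in auto)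
      then show "ax i a \<in> Wc b i" using i by (simp add: Wc_mpt mpt_ax)
    qed
    have s2: "ax i qq \<in> closure (Wc b 3)"
    proof (rule closure_ax_right[OF qb(2)])
      fix a assume a: "qq < a" "a \<le> 1/3"
      have sub: "ax i ` {qq<..1/3} \<subseteq> W b" using axis_W_high[OF i] by auto
      have "ax i a \<in> connected_component_set (W b) (ax i (1/3))"
        by (rule ax_in_comp[OF _ connected_ax' sub]) (use a qb axis_W_high[OF i] in auto)
      then show "ax i a \<in> Wc b 3" using i p_ax[OF i] by (simp add: Wc_def)
    qed
    show "{sigma b i} \<subseteq> Sfrak b i 3" using s1 s2 by (simp add: Sfrak_def sigma_ax)
  qed
qed

end


definition vecn :: "nat \<Rightarrow> real \<times> real" where
  "vecn n = (if n = 1 then (1, 0) else if n = 2 then (0, 1) else (0, 0))"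

lemma coord_shift: assumes "l < 3" "k < 3" "j < 3"
  shows "coord (y + e *\<^sub>R (vecn k - vecn j)) l = coord y l + e * ((if l = k then 1 else 0) - (if l = j then 1 else 0))"
proof -
  obtain a c where y: "y = (a, c)" by (cases y)
  have "l = 0 \<or> l = 1 \<or> l = 2" "k = 0 \<or> k = 1 \<or> k = 2" "j = 0 \<or> j = 1 \<or> j = 2" using assms by auto
  then show ?thesis unfolding y by (elim disjE; simp add: coord_def vecn_def algebra_simps)
qed

lemma norm_vecn: "norm (vecn k - vecn j) \<le> 2"
proof -
  have "norm (vecn k) \<le> 1" "norm (vecn j) \<le> 1" by (auto simp: vecn_def norm_Pair)
  then show ?thesis using norm_triangle_ineq4[of "vecn k" "vecn j"] by linarith
qed

lemma dist_shift: "dist (y + e *\<^sub>R (vecn k - vecn j)) y \<le> 2 * \<bar>e\<bar>"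
proof -
  have "dist (y + e *\<^sub>R (vecn k - vecn j)) y = \<bar>e\<bar> * norm (vecn k - vecn j)"
    by (simp add: dist_norm)
  also have "\<dots> \<le> \<bar>e\<bar> * 2" by (rule mult_left_mono[OF norm_vecn]) simp
  finally show ?thesis by simp
qed

lemma G0: "G b 0 = 0" by (simp add: G_def xlog3_def)

lemma G_mvt: assumes "0 < a" "a < c" "0 < b"
  shows "\<exists>z. a < z \<and> z < c \<and> G b c - G b a = (c - a) * Gd b z"
proof -
  have "continuous_on {a..c} (G b)" using assms by (intro continuous_on_subset[OF G_cont]) auto
  moreover have "\<And>x. a < x \<Longrightarrow> x < c \<Longrightarrow> G b differentiable (at x)"
  proof -
    fix x assume "a < x" "x < c"
    then have "(G b has_real_derivative Gd b x) (at x)" using G_deriv assms by auto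
    then show "G b differentiable (at x)" by (auto simp: real_differentiable_def)
  qed
  ultimately obtain l z where z: "a < z" "z < c" "DERIV (G b) z :> l" "G b c - G b a = (c - a) * l"
    using MVT[OF assms(2)] by blast
  have "l = Gd b z" using DERIV_unique[OF z(3) G_deriv] z assms by auto
  then show ?thesis using z by blast
qed

lemma other_idx: "(k::nat) < 3 \<Longrightarrow> \<exists>j l. j < 3 \<and> l < 3 \<and> k \<noteq> j \<and> k \<noteq> l \<and> j \<noteq> l"
  by (auto simp: numeral_3_eq_3 less_Suc_eq)

lemma LM1: assumes "0 < b" "y \<in> Xi" "k < 3" "coord y k = 0" "0 < r"
  shows "\<exists>x \<in> ball y r \<inter> Xi. F b x < F b y"
proof -
  obtain j l where jl0: "j < 3" "l < 3" "k \<noteq> j" "k \<noteq> l" "j \<noteq> l" using other_idx[OF assms(3)] by blast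
  have s: "coord y j + coord y l = 1" using coord_sum3[OF assms(3) jl0, of y] assms(4) by simp
  have "\<exists>j l. j < 3 \<and> l < 3 \<and> k \<noteq> j \<and> k \<noteq> l \<and> j \<noteq> l \<and> 0 < coord y j"
  proof (cases "0 < coord y j")
    case True then show ?thesis using jl0 by blast
  next
    case False
    then have "0 < coord y l" using s coord_Xi[OF assms(2) jl0(1)] by simp
    then show ?thesis using jl0 by blast
  qed
  then obtain j l where jl: "j < 3" "l < 3" "k \<noteq> j" "k \<noteq> l" "j \<noteq> l" and cj: "0 < coord y j" by blast
  define cj' where "cj' = coord y j"
  have cj1: "cj' \<le> 1" using coord_sum3[OF assms(3) jl, of y] coord_Xi[OF assms(2) jl(2)] assms(4) by (simp add: cj'_def)
  define M where "M = - 3/2 + (ln (3 * cj' / 2) + 1) / b"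
  define e where "e = min (cj' / 2) (min (r / 4) (exp (b * M) / 6))"
  have e: "0 < e" "e \<le> cj' / 2" "e \<le> r / 4" "e \<le> exp (b * M) / 6" using cj assms by (auto simp: e_def cj'_def)
  define x where "x = y + e *\<^sub>R (vecn k - vecn j)"
  have cx: "coord x k = e" "coord x j = cj' - e" "coord x l = coord y l"
    using coord_shift[of k k j y e] coord_shift[of j k j y e] coord_shift[of l k j y e] assms jl
    by (auto simp: x_def cj'_def)
  have xX: "x \<in> Xi"
  proof -
    have "0 \<le> coord x m" if "m < 3" for m
    proof -
      have "m = k \<or> m = j \<or> m = l" using third_idx[OF assms(3) jl(1,2,3,4,5) that] by blast
      then show ?thesis using cx e coord_Xi[OF assms(2) jl(2)] by auto
    qed
    then show ?thesis by (simp add: Xi_coord)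
  qed
  have xb: "x \<in> ball y r" using dist_shift[of y e k j] e by (simp add: x_def dist_commute)
  obtain z where z: "cj' - e < z" "z < cj'" "G b cj' - G b (cj' - e) = (cj' - (cj' - e)) * Gd b z"
    using G_mvt[of "cj' - e" cj' b] e cj assms(1) by (auto simp: cj'_def)
  have zM: "M \<le> Gd b z"
  proof -
    have "ln (3 * cj' / 2) \<le> ln (3 * z)" using z e cj by (subst ln_le_cancel_iff) (auto simp: cj'_def)
    then have "(ln (3 * cj' / 2) + 1) / b \<le> (ln (3 * z) + 1) / b" using assms(1) by (simp add: divide_right_mono)
    moreover have "- 3/2 \<le> - 3/2 * z" using z cj1 by simp
    ultimately show ?thesis by (simp add: M_def Gd_def)
  qed
  have lnM: "ln (3 * e) / b < M"
  proof -
    have "ln (3 * e) \<le> ln (exp (b * M) / 2)" using e by (subst ln_le_cancel_iff) auto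
    also have "\<dots> < b * M" by (simp add: ln_div)
    finally show ?thesis using assms(1) by (simp add: pos_divide_less_eq mult.commute)
  qed
  have Ge: "G b e \<le> e * (ln (3 * e) / b)"
    using e by (simp add: G_def xlog3_def)
  have Fx: "F b x = G b e + G b (cj' - e) + G b (coord y l) + 1/4"
    using F_G3[OF assms(3) jl, of b x] cx by simp
  have Fy: "F b y = G b 0 + G b cj' + G b (coord y l) + 1/4"
    using F_G3[OF assms(3) jl, of b y] assms(4) by (simp add: cj'_def)
  have "F b x - F b y = G b e - e * Gd b z" using Fx Fy z(3) G0 by simp
  also have "\<dots> \<le> e * (ln (3 * e) / b) - e * M" using Ge zM e by (smt (verit) mult_left_mono)
  also have "\<dots> < 0"
  proof -
    have "e * (ln (3 * e) / b) < e * M" using lnM e by (intro mult_strict_left_mono) auto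
    then show ?thesis by simp
  qed
  finally show ?thesis using xX xb by auto
qed


lemma F_shift: assumes "k < 3" "j < 3" "l < 3" "k \<noteq> j" "k \<noteq> l" "j \<noteq> l"
  shows "F b (y + t *\<^sub>R (vecn k - vecn j)) = G b (coord y k + t) + G b (coord y j - t) + G b (coord y l) + 1/4"
  using F_G3[OF assms, of b "y + t *\<^sub>R (vecn k - vecn j)"] coord_shift[of k k j y t] coord_shift[of j k j y t]
    coord_shift[of l k j y t] assms by simp

lemma LM2_dir: assumes "0 < b" "k < 3" "j < 3" "l < 3" "k \<noteq> j" "k \<noteq> l" "j \<noteq> l"
  "0 < coord y k" "0 < coord y j" "0 < r" "\<forall>x \<in> ball y r \<inter> Xi. F b y \<le> F b x" "y \<in> Xi"
  shows "Gd b (coord y k) = Gd b (coord y j)"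
proof -
  define f where "f t = G b (coord y k + t) + G b (coord y j - t) + G b (coord y l) + 1/4" for t
  have fF: "f t = F b (y + t *\<^sub>R (vecn k - vecn j))" for t
    using F_shift[OF assms(2-7), of b y t] by (simp add: f_def)
  have d1: "(G b has_real_derivative Gd b (coord y k + 0)) (at (coord y k + 0))" using G_deriv assms by auto
  have d2: "(G b has_real_derivative Gd b (coord y j - 0)) (at (coord y j - 0))" using G_deriv assms by auto
  have e1: "((\<lambda>t. coord y k + t) has_real_derivative 1) (at 0)" by (auto intro!: derivative_eq_intros)
  have e2: "((\<lambda>t. coord y j - t) has_real_derivative -1) (at 0)" by (auto intro!: derivative_eq_intros)
  have "((\<lambda>t. G b (coord y k + t) + G b (coord y j - t)) has_real_derivative
      (Gd b (coord y k + 0) * 1 + Gd b (coord y j - 0) * -1)) (at 0)"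
    by (rule DERIV_add[OF DERIV_chain2[where f="G b", OF d1 e1] DERIV_chain2[where f="G b", OF d2 e2]])
  then have "((\<lambda>t. G b (coord y k + t) + G b (coord y j - t)) has_real_derivative
      (Gd b (coord y k) - Gd b (coord y j))) (at 0)" by simp
  from DERIV_add[OF this DERIV_const]
  have "(f has_real_derivative (Gd b (coord y k) - Gd b (coord y j))) (at 0)"
    unfolding f_def by (simp add: add.assoc)
  moreover
  define d where "d = min (r/2) (min (coord y k) (coord y j))"
  have d: "0 < d" using assms by (simp add: d_def)
  have "\<forall>t. \<bar>0 - t\<bar> < d \<longrightarrow> f 0 \<le> f t"
  proof (intro allI impI)
    fix t :: real assume t: "\<bar>0 - t\<bar> < d"
    define x where "x = y + t *\<^sub>R (vecn k - vecn j)"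
    have cx: "coord x k = coord y k + t" "coord x j = coord y j - t" "coord x l = coord y l"
      using coord_shift[of k k j y t] coord_shift[of j k j y t] coord_shift[of l k j y t] assms
      by (auto simp: x_def)
    have "0 \<le> coord x m" if "m < 3" for m
    proof -
      have "m = k \<or> m = j \<or> m = l" using third_idx[of k j l m] assms that by auto
      then show ?thesis using cx t coord_Xi[OF assms(12,4)] by (auto simp: d_def)
    qed
    then have xX: "x \<in> Xi" by (simp add: Xi_coord)
    have "dist x y < r" using dist_shift[of y t k j] t by (simp add: x_def d_def)
    then have "F b y \<le> F b x" using assms(11) xX by (auto simp: dist_commute)
    moreover have "f 0 = F b y" using fF[of 0] by simp
    ultimately show "f 0 \<le> f t" using fF[of t] by (simp add: x_def)
  qed
  ultimately have "Gd b (coord y k) - Gd b (coord y j) = 0" using DERIV_local_min d by blast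
  then show ?thesis by simp
qed

lemma LM2: assumes "0 < b" "\<And>k. k < 3 \<Longrightarrow> 0 < coord y k" "0 < r" "\<forall>x \<in> ball y r \<inter> Xi. F b y \<le> F b x" "y \<in> Xi"
  shows "Gd b (coord y 1) = Gd b (coord y 0)" "Gd b (coord y 2) = Gd b (coord y 0)"
  using LM2_dir[OF assms(1), of 1 0 2 y r] LM2_dir[OF assms(1), of 2 0 1 y r] assms by auto

lemma Gd_deriv: "0 < t \<Longrightarrow> 0 < b \<Longrightarrow> (Gd b has_real_derivative (- 3/2 + 1 / (b * t))) (at t)"
  unfolding Gd_def[abs_def]
  by (auto intro!: derivative_eq_intros simp: field_simps)

lemma Gd_crit: assumes "0 < u" "u < v" "0 < b" "Gd b u = Gd b v"
  shows "\<exists>z. u < z \<and> z < v \<and> z = 2 / (3 * b)"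
proof -
  have "continuous_on {u..v} (Gd b)"
  proof (intro continuous_at_imp_continuous_on ballI)
    fix x assume "x \<in> {u..v}"
    then show "isCont (Gd b) x" using DERIV_isCont[OF Gd_deriv[of x b]] assms by auto
  qed
  moreover have "\<And>x. u < x \<Longrightarrow> x < v \<Longrightarrow> Gd b differentiable (at x)"
  proof -
    fix x assume "u < x" "x < v"
    then show "Gd b differentiable (at x)" using Gd_deriv[of x b] assms by (auto simp: real_differentiable_def)
  qed
  ultimately obtain l z where z: "u < z" "z < v" "DERIV (Gd b) z :> l" "Gd b v - Gd b u = (v - u) * l"
    using MVT[OF assms(2)] by blast
  have "l = - 3/2 + 1 / (b * z)" using DERIV_unique[OF z(3) Gd_deriv[of z b]] z assms by auto
  moreover have "l = 0" using z(4) assms by simp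
  ultimately have "1 / (b * z) = 3/2" by simp
  then have "z = 2 / (3 * b)" using assms z by (simp add: field_simps)
  then show ?thesis using z by blast
qed

lemma no_three: assumes "0 < u" "u < v" "v < w" "0 < b" "Gd b u = Gd b v" "Gd b v = Gd b w"
  shows False
  using Gd_crit[OF assms(1,2,4,5)] Gd_crit[of v w b] assms by auto

lemma two_equal: assumes "0 < b" "0 < u" "0 < v" "0 < w" "Gd b u = Gd b v" "Gd b u = Gd b w"
  shows "u = v \<or> u = w \<or> v = w"
proof (rule ccontr)
  assume "\<not> ?thesis"
  then have ne: "u \<noteq> v" "u \<noteq> w" "v \<noteq> w" by auto
  have e: "Gd b v = Gd b u" "Gd b w = Gd b u" "Gd b u = Gd b v" "Gd b u = Gd b w" "Gd b v = Gd b w" "Gd b w = Gd b v"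
    using assms(5,6) by simp_all
  consider "u < v" "v < w" | "u < w" "w < v" | "v < u" "u < w" | "v < w" "w < u" | "w < u" "u < v" | "w < v" "v < u"
    using ne by linarith
  then show False
  proof cases
    case 1 show False by (rule no_three[OF assms(2) 1 assms(1) e(3) e(5)])
  next
    case 2 show False by (rule no_three[OF assms(2) 2 assms(1) e(4) e(6)])
  next
    case 3 show False by (rule no_three[OF assms(3) 3 assms(1) e(1) e(4)])
  next
    case 4 show False by (rule no_three[OF assms(3) 4 assms(1) e(5) e(2)])
  next
    case 5 show False by (rule no_three[OF assms(4) 5 assms(1) e(2) e(3)])
  next
    case 6 show False by (rule no_three[OF assms(4) 6 assms(1) e(6) e(1)])
  qed
qed

lemma classify: assumes "beta3 < b" "\<And>k. k < 3 \<Longrightarrow> 0 < coord y k"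
  "Gd b (coord y 1) = Gd b (coord y 0)" "Gd b (coord y 2) = Gd b (coord y 0)"
  shows "\<exists>k<3. y = ax k (1/3) \<or> y = ax k (p_beta b) \<or> y = ax k (q_beta b)"
proof -
  have b0: "0 < b" using assms(1) beta3_pos by simp
  have "\<exists>i j k. i < 3 \<and> j < 3 \<and> k < 3 \<and> i \<noteq> j \<and> i \<noteq> k \<and> j \<noteq> k \<and> coord y i = coord y j"
  proof -
    have "coord y 0 = coord y 1 \<or> coord y 0 = coord y 2 \<or> coord y 1 = coord y 2"
      using two_equal[OF b0 assms(2)[of 0] assms(2)[of 1] assms(2)[of 2] assms(3)[symmetric] assms(4)[symmetric]] by simp
    then show ?thesis
    proof (elim disjE)
      assume "coord y 0 = coord y 1" then show ?thesis by (intro exI[of _ 0] exI[of _ 1] exI[of _ 2]) auto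
    next
      assume "coord y 0 = coord y 2" then show ?thesis by (intro exI[of _ 0] exI[of _ 2] exI[of _ 1]) auto
    next
      assume "coord y 1 = coord y 2" then show ?thesis by (intro exI[of _ 1] exI[of _ 2] exI[of _ 0]) auto
    qed
  qed
  then obtain i j k where ijk: "i < 3" "j < 3" "k < 3" "i \<noteq> j" "i \<noteq> k" "j \<noteq> k" "coord y i = coord y j" by blast
  define a where "a = coord y i"
  have ta: "coord y i = a" "coord y j = a" using ijk by (auto simp: a_def)
  have ck: "coord y k = 1 - 2*a" by (rule tie_ax(2)[OF ijk(1-6) ta])
  have ye: "y = ax k a" by (rule tie_ax(1)[OF ijk(1-6) ta])
  have gd_all: "\<And>m. m < 3 \<Longrightarrow> Gd b (coord y m) = Gd b (coord y 0)"
    using assms(3,4) by (auto simp: numeral_3_eq_3 less_Suc_eq numeral_2_eq_2)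
  have "Gd b a = Gd b (1 - 2*a)" using gd_all[OF ijk(1)] gd_all[OF ijk(3)] ta ck by simp
  moreover have a0: "0 < a" "a < 1/2" using assms(2)[OF ijk(1)] assms(2)[OF ijk(3)] ta ck by auto
  ultimately have "3/2 * (1 - 3*a) * (1 - f0 a / b) = 0" using Gd_axis[OF a0 b0] by simp
  then have "a = 1/3 \<or> f0 a = b" using b0 by auto
  then have "a = 1/3 \<or> a = p_beta b \<or> a = q_beta b" using f0_sol[OF assms(1) a0] by blast
  then show ?thesis using ye ijk(3) by blast
qed

lemma crit_in_R: assumes "2 < b" "beta3 < b" "i < 3" "k < 3" "ax k a \<in> R i"
  "a = 1/3 \<or> a = p_beta b \<or> a = q_beta b"
  shows "ax k a = mpt b i"
proof -
  have q: "1/3 < q_beta b" using q_gt_third[OF assms(1,2)] .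
  obtain j l where jl: "j < 3" "l < 3" "k \<noteq> j" "k \<noteq> l" "j \<noteq> l" using other_idx[OF assms(4)] by blast
  have Ri: "\<And>m. m < 3 \<Longrightarrow> m \<noteq> i \<Longrightarrow> coord (ax k a) m < coord (ax k a) i" using assms(5) by (auto simp: R_def)
  have cj: "coord (ax k a) j = a" "coord (ax k a) l = a" "coord (ax k a) k = 1 - 2*a"
    using coord_ax[OF assms(4) jl(1), of a] coord_ax[OF assms(4) jl(2), of a] coord_ax[OF assms(4) assms(4), of a] jl by auto
  have ik: "i = k"
  proof (rule ccontr)
    assume "i \<noteq> k"
    then have "i = j \<or> i = l" using third_idx[of j l k i] jl assms by auto
    then show False
    proof
      assume "i = j" then show False using Ri[of l] cj jl by auto
    next
      assume "i = l" then show False using Ri[of j] cj jl by auto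
    qed
  qed
  have "a < 1 - 2*a" using Ri[of j] cj jl ik by auto
  then have "a = p_beta b" using assms(6) q by auto
  then show ?thesis using ik by (simp add: mpt_ax)
qed

theorem MIN: assumes "2 < b" "beta3 < b" "i < 3" "z \<in> W b" "z \<in> R i"
  shows "mpt b i \<in> connected_component_set (W b) z"
proof -
  define C where "C = connected_component_set (W b) z"
  have b0: "0 < b" using assms beta3_pos by simp
  have CR: "C \<subseteq> R i" unfolding C_def by (rule Wc_in_R) (use assms in auto)
  have CW: "C \<subseteq> W b" by (simp add: C_def connected_component_subset)
  have clX: "closure C \<subseteq> Xi" using closure_mono[OF CW] closure_W by blast
  have comp: "compact (closure C)"
    using clX Xi_bounded by (simp add: compact_eq_bounded_closed bounded_subset)
  have zC0: "z \<in> C" using assms(4) by (simp add: C_def)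
  then have ne: "closure C \<noteq> {}" using closure_subset by blast
  obtain y where y: "y \<in> closure C" "\<And>w. w \<in> closure C \<Longrightarrow> F b y \<le> F b w"
    using continuous_attains_inf[OF comp ne continuous_on_subset[OF F_cont clX]] by blast
  have zC: "z \<in> C" using assms(4) by (simp add: C_def)
  have "F b y \<le> F b z" using y(2) zC closure_subset by blast
  then have yW: "y \<in> W b" using assms(4) y(1) clX by (auto simp: W_def)
  have yC: "y \<in> C" using comp_closure(1)[OF yW y(1)[unfolded C_def]] unfolding C_def .
  obtain r where r: "0 < r" "ball y r \<inter> Xi \<subseteq> C" using comp_closure(2)[OF yW y(1)[unfolded C_def]] unfolding C_def by blast
  have lmin: "\<forall>x \<in> ball y r \<inter> Xi. F b y \<le> F b x" using r y(2) closure_subset by blast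
  have yX: "y \<in> Xi" using yW by (simp add: W_def)
  have pos: "\<And>k. k < 3 \<Longrightarrow> 0 < coord y k"
  proof (rule ccontr)
    fix k assume k: "k < 3" "\<not> 0 < coord y k"
    then have "coord y k = 0" using coord_Xi[OF yX k(1)] by simp
    then obtain x where "x \<in> ball y r \<inter> Xi" "F b x < F b y" using LM1[OF b0 yX k(1) _ r(1)] by blast
    then show False using lmin by force
  qed
  note g = LM2[OF b0 pos r(1) lmin yX]
  obtain k where k: "k < 3" "y = ax k (1/3) \<or> y = ax k (p_beta b) \<or> y = ax k (q_beta b)"
    using classify[OF assms(2) pos g] by blast
  have yR: "y \<in> R i" using yC CR by blast
  then obtain a where "y = ax k a" "a = 1/3 \<or> a = p_beta b \<or> a = q_beta b" using k by blast
  then have "y = mpt b i" using crit_in_R[OF assms(1,2,3) k(1)] yR by blast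
  then show ?thesis using yC by (simp add: C_def)
qed


lemma NEAR: assumes "2 < b" "beta3 < b" "i < 3" "k < 3" "i \<noteq> k"
  shows "sigma b k \<in> closure (Wc b i)" "mpt b i \<in> W b"
proof -
  obtain j where j: "j < 3" "j \<noteq> i" "j \<noteq> k" using assms(3-5) by (auto simp: numeral_3_eq_3 less_Suc_eq)
  define q where "q = q_beta b"
  have q: "1/3 < q" "q < 1/2" "f0 q = b" using q_gt_third[OF assms(1,2)] q_props[OF assms(2)] by (auto simp: q_def)
  have b0: "0 < b" using assms beta3_pos by simp
  have qb: "2/3 < q * b" using tf0_gt[OF q(1,2)] q(3) by (simp add: mult.commute)
  obtain s0 where s0: "0 < s0" "s0 < q" "\<And>s. 0 < s \<Longrightarrow> s \<le> s0 \<Longrightarrow> G b (q + s) + G b (q - s) < 2 * G b q"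
    using transverse_down[of q b] q qb b0 by auto
  define pt where "pt s = ax k q + s *\<^sub>R (vecn i - vecn j)" for s
  have cpt: "coord (pt s) i = q + s" "coord (pt s) j = q - s" "coord (pt s) k = 1 - 2*q" for s
    using coord_shift[of i i j "ax k q" s] coord_shift[of j i j "ax k q" s] coord_shift[of k i j "ax k q" s]
      coord_ax[of k i q] coord_ax[of k j q] coord_ax[of k k q] assms j by (auto simp: pt_def)
  have Fpt: "F b (pt s) = G b (q + s) + G b (q - s) + G b (1 - 2*q) + 1/4" for s
    using F_shift[of i j k b "ax k q" s] coord_ax[of k i q] coord_ax[of k j q] coord_ax[of k k q] assms j
    by (auto simp: pt_def)
  have Hq: "H b = 2 * G b q + G b (1 - 2*q) + 1/4" by (simp add: H_eq phi_def q_def)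
  have ptW: "pt s \<in> W b" if s: "0 < s" "s \<le> s0" for s
  proof -
    have "0 \<le> coord (pt s) m" if "m < 3" for m
    proof -
      have "m = i \<or> m = j \<or> m = k" using third_idx[of i j k m] assms j that by auto
      then show ?thesis using cpt s s0 q by auto
    qed
    then have "pt s \<in> Xi" by (simp add: Xi_coord)
    moreover have "F b (pt s) < H b" using Fpt s0(3)[OF s] Hq by simp
    ultimately show ?thesis by (simp add: W_def)
  qed
  have ptR: "pt s \<in> R i" if s: "0 < s" for s
  proof -
    have "coord (pt s) m < coord (pt s) i" if "m < 3" "m \<noteq> i" for m
    proof -
      have "m = j \<or> m = k" using third_idx[of j k i m] assms j that by auto
      then show ?thesis using cpt s q by auto
    qed
    then show ?thesis by (simp add: R_def)
  qed
  have pt_cont: "continuous_on S pt" for S unfolding pt_def by (intro continuous_intros)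
  have conn: "connected (pt ` {0<..s0})" by (rule connected_continuous_image[OF pt_cont]) simp
  have sub: "pt ` {0<..s0} \<subseteq> W b" using ptW by auto
  have mz: "mpt b i \<in> connected_component_set (W b) (pt s0)"
    by (rule MIN[OF assms(1,2,3) ptW[OF s0(1) order.refl] ptR[OF s0(1)]])
  have eqc: "connected_component_set (W b) (pt s0) = Wc b i"
    using connected_component_eq[OF mz] assms(3) by (simp add: Wc_mpt)
  have inS: "pt s \<in> Wc b i" if "0 < s" "s \<le> s0" for s
  proof -
    have ss: "pt ` {0<..s0} \<subseteq> connected_component_set (W b) (pt s0)"
      by (rule connected_component_maximal[OF _ conn sub]) (use s0 in auto)
    have "pt s \<in> pt ` {0<..s0}" using that by auto
    then have "pt s \<in> connected_component_set (W b) (pt s0)" using ss by blast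
    then show ?thesis using eqc by simp
  qed
  show "mpt b i \<in> W b" using mz connected_component_subset by blast
  have "pt 0 \<in> closure (Wc b i)"
    unfolding closure_approachable
  proof (intro allI impI)
    fix e :: real assume e: "0 < e"
    define s where "s = min s0 (e/4)"
    have s: "0 < s" "s \<le> s0" "s \<le> e/4" using s0 e by (auto simp: s_def)
    have "dist (pt s) (pt 0) \<le> 2 * \<bar>s\<bar>" using dist_shift[of "ax k q" s i j] by (simp add: pt_def)
    then have "dist (pt s) (pt 0) < e" using s by simp
    then show "\<exists>y\<in>Wc b i. dist y (pt 0) < e" using inS[OF s(1,2)] by blast
  qed
  then show "sigma b k \<in> closure (Wc b i)" by (simp add: pt_def sigma_ax q_def)
qed

lemma set3: "{i, j, k} = {0, 1, 2::nat} \<Longrightarrow> i < 3 \<and> j < 3 \<and> k < 3 \<and> i \<noteq> j \<and> i \<noteq> k \<and> j \<noteq> k"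
proof -
  assume h: "{i, j, k} = {0, 1, 2::nat}"
  have m: "i \<in> {0,1,2::nat}" "j \<in> {0,1,2::nat}" "k \<in> {0,1,2::nat}" using h by blast+
  have card: "card {i, j, k} = 3" using h by simp
  have two: "card {x, y::nat} \<le> 2" for x y by (simp add: card_insert_if)
  have "i \<noteq> j"
  proof
    assume "i = j" then have "{i, j, k} = {j, k}" by auto
    then show False using card two[of j k] by simp
  qed
  moreover have "i \<noteq> k"
  proof
    assume "i = k" then have "{i, j, k} = {j, k}" by auto
    then show False using card two[of j k] by simp
  qed
  moreover have "j \<noteq> k"
  proof
    assume "j = k" then have "{i, j, k} = {i, k}" by auto
    then show False using card two[of i k] by simp
  qed
  moreover have "i < 3" "j < 3" "k < 3" using m by auto
  ultimately show ?thesis by simp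
qed


lemma mpt_W_big: assumes "2 < b" "beta3 < b" "i < 3" shows "mpt b i \<in> W b"
proof -
  have "(if i = 0 then 1 else 0) < (3::nat)" "i \<noteq> (if i = 0 then 1 else 0)" by auto
  then show ?thesis using NEAR(2)[OF assms] by blast
qed

theorem proposition4p4:
  shows
  "(\<forall>\<beta>. beta3 < \<beta> \<and> 2 \<le> \<beta> \<longrightarrow>
       (\<forall>i<3. \<forall>j<3. i \<noteq> j \<longrightarrow> Wc \<beta> i \<noteq> Wc \<beta> j))
   \<and> (\<forall>\<beta>. beta3 < \<beta> \<and> 2 < \<beta> \<longrightarrow>
       (\<forall>i j k. {i, j, k} = {0, 1, 2::nat} \<longrightarrow> Sfrak \<beta> i j = {sigma \<beta> k}))
   \<and> (beta3 < 2 \<longrightarrow> (\<forall>i<3. \<forall>j<3. i \<noteq> j \<longrightarrow> Sfrak 2 i j = {p_pt}))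
   \<and> (\<forall>\<beta>. beta3 < \<beta> \<and> \<beta> < 2 \<longrightarrow>
       (\<forall>i\<le>3. \<forall>j\<le>3. i \<noteq> j \<longrightarrow> Wc \<beta> i \<noteq> Wc \<beta> j))
   \<and> (\<forall>\<beta>. beta3 < \<beta> \<and> \<beta> < 2 \<longrightarrow>
       (\<forall>i<3. \<forall>j<3. i \<noteq> j \<longrightarrow> Sfrak \<beta> i j = {})
       \<and> (\<forall>i<3. Sfrak \<beta> i 3 = {sigma \<beta> i}))"
proof -
  have c1: "\<forall>\<beta>. beta3 < \<beta> \<and> 2 \<le> \<beta> \<longrightarrow> (\<forall>i<3. \<forall>j<3. i \<noteq> j \<longrightarrow> Wc \<beta> i \<noteq> Wc \<beta> j)"
  proof (rule allI, rule impI)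
    fix b :: real assume b: "beta3 < b \<and> 2 \<le> b"
    show "\<forall>i<3. \<forall>j<3. i \<noteq> j \<longrightarrow> Wc b i \<noteq> Wc b j"
    proof (cases "b = 2")
      case True
      then show ?thesis using part1_cond[of b] mpt_W_two b by auto
    next
      case False
      then have "2 < b" using b by simp
      then show ?thesis using part1_cond[of b] mpt_W_big b by auto
    qed
  qed
  have c2: "\<forall>\<beta>. beta3 < \<beta> \<and> 2 < \<beta> \<longrightarrow>
       (\<forall>i j k. {i, j, k} = {0, 1, 2::nat} \<longrightarrow> Sfrak \<beta> i j = {sigma \<beta> k})"
  proof (intro allI impI)
    fix b :: real and i j k :: nat
    assume b: "beta3 < b \<and> 2 < b" and ijk: "{i, j, k} = {0, 1, 2::nat}"
    note d = set3[OF ijk]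
    have "Sfrak b i j \<subseteq> {sigma b k}" using Sfrak_sub[of b i j k] b d by auto
    moreover have "sigma b k \<in> Sfrak b i j"
      using NEAR(1)[of b i k] NEAR(1)[of b j k] b d by (auto simp: Sfrak_def)
    ultimately show "Sfrak b i j = {sigma b k}" by blast
  qed
  have c3: "beta3 < 2 \<longrightarrow> (\<forall>i<3. \<forall>j<3. i \<noteq> j \<longrightarrow> Sfrak 2 i j = {p_pt})"
    using part3 by blast
  have c4: "\<forall>\<beta>. beta3 < \<beta> \<and> \<beta> < 2 \<longrightarrow> (\<forall>i\<le>3. \<forall>j\<le>3. i \<noteq> j \<longrightarrow> Wc \<beta> i \<noteq> Wc \<beta> j)"
    using part4 by blast
  have c5: "\<forall>\<beta>. beta3 < \<beta> \<and> \<beta> < 2 \<longrightarrow>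
       (\<forall>i<3. \<forall>j<3. i \<noteq> j \<longrightarrow> Sfrak \<beta> i j = {}) \<and> (\<forall>i<3. Sfrak \<beta> i 3 = {sigma \<beta> i})"
    using part5 by blast
  show ?thesis using c1 c2 c3 c4 c5 by blast
qed


end
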